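(* Let $Y$ be a Young diagram with $n$ boxes and $Q$ a constant symmetric $n\times n$ matrix. Let $V_{Y;Q}(t)$ be the unique solution of $$\dot V=-\Gamma_1V-V\Gamma_1^T-Q-V\Gamma_2V,\qquad \lim_{t\to0^+}V^{-1}=0,$$ on its maximal interval of definition in $(0,+\infty)$. Then $V_{Y;Q}$ is monotone non-increasing, i.e. $\dot V_{Y;Q}(t)\le0$ (as a symmetric matrix) for all $t$ in that interval.
   Context: A Young diagram $Y$ has rows of lengths $n_1\ge\dots\ge n_k$, $\sum n_a=n$; boxes are labelled $ai$ with $a$ the row and $i=1,\dots,n_a$ the position in the row. $\Gamma_1=\Gamma_1(Y)$, $\Gamma_2=\Gamma_2(Y)$ are the $n\times n$ matrices indexed by boxes with $(\Gamma_1)_{ai,bj}=\delta_{ab}\delta_{i,j-1}$ and $(\Gamma_2)_{ai,bj}=\delta_{ab}\delta_{i1}\delta_{j1}$. The limit condition means $V(t)$ is invertible for small $t>0$ and $V(t)^{-1}\to0$ as $t\to0^+$; such a solution exists and is unique. *)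

theory Defs
  imports "HOL-Analysis.Analysis"
begin

text \<open>A Young diagram is given by the list ns = [n_1,...,n_k] of its row lengths,
  which are positive and non-increasing.  Boxes are pairs (a,i) with
  1 \<le> a \<le> k (row) and 1 \<le> i \<le> n_a (position in the row).
  n x n matrices indexed by boxes are represented as functions
  box \<Rightarrow> box \<Rightarrow> real, of which only the entries indexed by boxes matter.\<close>

type_synonym box = "nat \<times> nat"
type_synonym bmat = "box \<Rightarrow> box \<Rightarrow> real"

definition young_diagram :: "nat list \<Rightarrow> bool" where
  "young_diagram ns \<longleftrightarrow> (\<forall>a<length ns. 0 < ns ! a) \<and>
     (\<forall>a b. a \<le> b \<longrightarrow> b < length ns \<longrightarrow> ns ! b \<le> ns ! a)"

definition boxes :: "nat list \<Rightarrow> box set" where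
  "boxes ns = {(a, i). 1 \<le> a \<and> a \<le> length ns \<and> 1 \<le> i \<and> i \<le> ns ! (a - 1)}"

definition Gamma1 :: bmat where
  "Gamma1 = (\<lambda>(a, i) (b, j). if a = b \<and> i = j - 1 \<and> 1 \<le> j then 1 else 0)"

definition Gamma2 :: bmat where
  "Gamma2 = (\<lambda>(a, i) (b, j). if a = b \<and> i = 1 \<and> j = 1 then 1 else 0)"

definition mmul :: "box set \<Rightarrow> bmat \<Rightarrow> bmat \<Rightarrow> bmat" where
  "mmul B M N = (\<lambda>x z. \<Sum>y\<in>B. M x y * N y z)"

definition mtrans :: "bmat \<Rightarrow> bmat" where
  "mtrans M = (\<lambda>x y. M y x)"

definition is_inverse :: "box set \<Rightarrow> bmat \<Rightarrow> bmat \<Rightarrow> bool" where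
  "is_inverse B M W \<longleftrightarrow> (\<forall>x\<in>B. \<forall>z\<in>B.
     mmul B M W x z = (if x = z then 1 else 0) \<and> mmul B W M x z = (if x = z then 1 else 0))"

definition invertible_on :: "box set \<Rightarrow> bmat \<Rightarrow> bool" where
  "invertible_on B M \<longleftrightarrow> (\<exists>W. is_inverse B M W)"

definition minv :: "box set \<Rightarrow> bmat \<Rightarrow> bmat" where
  "minv B M = (SOME W. is_inverse B M W)"

definition symmetric_on :: "box set \<Rightarrow> bmat \<Rightarrow> bool" where
  "symmetric_on B M \<longleftrightarrow> (\<forall>x\<in>B. \<forall>y\<in>B. M x y = M y x)"

definition neg_semidef_on :: "box set \<Rightarrow> bmat \<Rightarrow> bool" where
  "neg_semidef_on B M \<longleftrightarrow> (\<forall>v :: box \<Rightarrow> real. (\<Sum>x\<in>B. \<Sum>y\<in>B. v x * M x y * v y) \<le> 0)"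

end

theory Submission
  imports Defs "HOL-Analysis.Analysis" "HOL-Library.Function_Algebras"
begin

locale fb =
  fixes B :: "box set"
  assumes finB: "finite B"
begin

definition rs :: "bmat \<Rightarrow> bmat" where
  "rs M = (\<lambda>x y. if x \<in> B \<and> y \<in> B then M x y else 0)"
definition mm :: "bmat \<Rightarrow> bmat \<Rightarrow> bmat" where
  "mm P R = (\<lambda>x z. if x \<in> B \<and> z \<in> B then \<Sum>y\<in>B. P x y * R y z else 0)"
definition Idm :: bmat where
  "Idm = (\<lambda>x y. if x \<in> B \<and> x = y then 1 else 0)"
definition rsd :: "bmat \<Rightarrow> bool" where
  "rsd M \<longleftrightarrow> (\<forall>x y. x \<notin> B \<or> y \<notin> B \<longrightarrow> M x y = 0)"
definition qf :: "(box \<Rightarrow> real) \<Rightarrow> bmat \<Rightarrow> real" where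
  "qf v M = (\<Sum>x\<in>B. \<Sum>y\<in>B. v x * M x y * v y)"
definition nm :: "bmat \<Rightarrow> real" where
  "nm M = (\<Sum>x\<in>B. \<Sum>y\<in>B. \<bar>M x y\<bar>)"

lemma mm_assoc: "mm (mm P R) S = mm P (mm R S)"
  unfolding mm_def
  by (auto intro!: ext simp: sum_distrib_left sum_distrib_right mult.assoc intro: sum.swap)

lemma mm_add_l: "mm (P + R) S = mm P S + mm R S"
  by (auto intro!: ext simp: mm_def distrib_right sum.distrib)
lemma mm_add_r: "mm P (R + S) = mm P R + mm P S"
  by (auto intro!: ext simp: mm_def distrib_left sum.distrib)
lemma mm_diff_l: "mm (P - R) S = mm P S - mm R S"
  by (auto intro!: ext simp: mm_def left_diff_distrib sum_subtractf)
lemma mm_diff_r: "mm P (R - S) = mm P R - mm P S"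
  by (auto intro!: ext simp: mm_def right_diff_distrib sum_subtractf)
lemma mm_minus_l: "mm (- P) S = - mm P S"
  by (auto intro!: ext simp: mm_def sum_negf)
lemma mm_minus_r: "mm P (- S) = - mm P S"
  by (auto intro!: ext simp: mm_def sum_negf)
lemma mm_zero_l: "mm 0 S = 0" and mm_zero_r: "mm P 0 = 0"
  by (auto intro!: ext simp: mm_def)
lemma mm_rs_l: "mm (rs P) R = mm P R" and mm_rs_r: "mm P (rs R) = mm P R"
  by (auto intro!: ext sum.cong simp: mm_def rs_def)

lemma rsd_mm: "rsd (mm P R)" by (auto simp: rsd_def mm_def)
lemma rsd_rs: "rsd (rs P)" by (auto simp: rsd_def rs_def)
lemma rsd_Idm: "rsd Idm" by (auto simp: rsd_def Idm_def)
lemma rsd_add: "rsd P \<Longrightarrow> rsd R \<Longrightarrow> rsd (P + R)" by (auto simp: rsd_def)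
lemma rsd_diff: "rsd P \<Longrightarrow> rsd R \<Longrightarrow> rsd (P - R)" by (auto simp: rsd_def)
lemma rsd_uminus: "rsd P \<Longrightarrow> rsd (- P)" by (auto simp: rsd_def)
lemma rsd_zero: "rsd 0" by (auto simp: rsd_def)
lemma rsd_tr: "rsd P \<Longrightarrow> rsd (mtrans P)" by (auto simp: rsd_def mtrans_def)
lemmas rsd_intros = rsd_mm rsd_rs rsd_Idm rsd_add rsd_diff rsd_uminus rsd_zero rsd_tr

lemma rsd_rs_eq: "rsd P \<Longrightarrow> rs P = P" by (auto intro!: ext simp: rsd_def rs_def)

lemma Idm_l: "rsd P \<Longrightarrow> mm Idm P = P"
proof (rule ext, rule ext)
  fix x z assume r: "rsd P"
  show "mm Idm P x z = P x z"
  proof (cases "x \<in> B \<and> z \<in> B")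
    case True
    then have "(\<Sum>y\<in>B. Idm x y * P y z) = (\<Sum>y\<in>B. if y = x then P x z else 0)"
      by (intro sum.cong) (auto simp: Idm_def)
    also have "\<dots> = P x z" using True finB by simp
    finally show ?thesis using True by (simp add: mm_def)
  next
    case False then have "P x z = 0" using r unfolding rsd_def by blast
    then show ?thesis using False by (auto simp: mm_def)
  qed
qed

lemma Idm_r: "rsd P \<Longrightarrow> mm P Idm = P"
proof (rule ext, rule ext)
  fix x z assume r: "rsd P"
  show "mm P Idm x z = P x z"
  proof (cases "x \<in> B \<and> z \<in> B")
    case True
    then have "(\<Sum>y\<in>B. P x y * Idm y z) = (\<Sum>y\<in>B. if y = z then P x z else 0)"
      by (intro sum.cong) (auto simp: Idm_def)
    also have "\<dots> = P x z" using True finB by simp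
    finally show ?thesis using True by (simp add: mm_def)
  next
    case False then have "P x z = 0" using r unfolding rsd_def by blast
    then show ?thesis using False by (auto simp: mm_def)
  qed
qed

lemma tr_mm: "mtrans (mm P R) = mm (mtrans R) (mtrans P)"
  by (auto intro!: ext sum.cong simp: mm_def mtrans_def mult.commute)
lemma tr_add: "mtrans (P + R) = mtrans P + mtrans R" by (auto intro!: ext simp: mtrans_def)
lemma tr_diff: "mtrans (P - R) = mtrans P - mtrans R" by (auto intro!: ext simp: mtrans_def)
lemma tr_minus: "mtrans (- P) = - mtrans P" by (auto intro!: ext simp: mtrans_def)
lemma tr_tr: "mtrans (mtrans P) = P" by (auto intro!: ext simp: mtrans_def)
lemma tr_zero: "mtrans 0 = 0" by (auto intro!: ext simp: mtrans_def)
lemma tr_Idm: "mtrans Idm = Idm" by (auto intro!: ext simp: mtrans_def Idm_def)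
lemma tr_rs: "mtrans (rs P) = rs (mtrans P)" by (auto intro!: ext simp: mtrans_def rs_def)


definition mderiv :: "(real \<Rightarrow> bmat) \<Rightarrow> bmat \<Rightarrow> real \<Rightarrow> bool" where
  "mderiv M D t \<longleftrightarrow> (\<forall>x y. ((\<lambda>s. M s x y) has_real_derivative D x y) (at t))"

lemma mderiv_const: "mderiv (\<lambda>s. P) 0 t"
  by (simp add: mderiv_def)
lemma mderiv_add: "mderiv P P' t \<Longrightarrow> mderiv R R' t \<Longrightarrow> mderiv (\<lambda>s. P s + R s) (P' + R') t"
  by (auto simp: mderiv_def intro!: derivative_eq_intros)
lemma mderiv_diff: "mderiv P P' t \<Longrightarrow> mderiv R R' t \<Longrightarrow> mderiv (\<lambda>s. P s - R s) (P' - R') t"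
  by (auto simp: mderiv_def intro!: derivative_eq_intros)
lemma mderiv_uminus: "mderiv P P' t \<Longrightarrow> mderiv (\<lambda>s. - P s) (- P') t"
  by (auto simp: mderiv_def intro!: derivative_eq_intros)
lemma mderiv_tr: "mderiv P P' t \<Longrightarrow> mderiv (\<lambda>s. mtrans (P s)) (mtrans P') t"
  by (auto simp: mderiv_def mtrans_def)
lemma mderiv_mm: "mderiv P P' t \<Longrightarrow> mderiv R R' t \<Longrightarrow>
   mderiv (\<lambda>s. mm (P s) (R s)) (mm P' (R t) + mm (P t) R') t"
  unfolding mderiv_def
proof (intro allI)
  fix x z assume p: "\<forall>x y. ((\<lambda>s. P s x y) has_real_derivative P' x y) (at t)"
    and r: "\<forall>x y. ((\<lambda>s. R s x y) has_real_derivative R' x y) (at t)"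
  show "((\<lambda>s. mm (P s) (R s) x z) has_real_derivative (mm P' (R t) + mm (P t) R') x z) (at t)"
  proof (cases "x \<in> B \<and> z \<in> B")
    case True
    have "((\<lambda>s. \<Sum>y\<in>B. P s x y * R s y z) has_real_derivative
        (\<Sum>y\<in>B. P' x y * R t y z + P t x y * R' y z)) (at t)"
      by (intro DERIV_sum, rule DERIV_cong[OF DERIV_mult[OF p[rule_format] r[rule_format]]])
        (simp add: algebra_simps)
    then show ?thesis using True by (simp add: mm_def sum.distrib)
  next
    case False
    then have "(\<lambda>s. mm (P s) (R s) x z) = (\<lambda>s. 0)" "(mm P' (R t) + mm (P t) R') x z = 0"
      by (auto simp: mm_def)
    then show ?thesis by simp
  qed
qed
lemma mderiv_transform: "mderiv M D t \<Longrightarrow> open S \<Longrightarrow> t \<in> S \<Longrightarrow> (\<And>s. s \<in> S \<Longrightarrow> M s = N s) \<Longrightarrow> mderiv N D t"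
  unfolding mderiv_def
  by (metis (no_types, lifting) has_field_derivative_transform_within_open)
lemma mderiv_isCont: "mderiv M D t \<Longrightarrow> isCont (\<lambda>s. M s x y) t"
  unfolding mderiv_def using DERIV_isCont by blast
lemma mderiv_eqD: "mderiv M D t \<Longrightarrow> D = D' \<Longrightarrow> mderiv M D' t" by simp

lemma nm_nonneg: "0 \<le> nm M" by (simp add: nm_def sum_nonneg)
lemma nm_entry: "x \<in> B \<Longrightarrow> y \<in> B \<Longrightarrow> \<bar>M x y\<bar> \<le> nm M"
proof -
  assume xy: "x \<in> B" "y \<in> B"
  have "\<bar>M x y\<bar> \<le> (\<Sum>y\<in>B. \<bar>M x y\<bar>)"
    using xy finB by (intro member_le_sum) auto
  also have "\<dots> \<le> nm M" unfolding nm_def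
    using xy finB by (intro member_le_sum[where f="\<lambda>x. \<Sum>y\<in>B. \<bar>M x y\<bar>"]) (auto intro: sum_nonneg)
  finally show ?thesis .
qed
lemma nm_add: "nm (P + R) \<le> nm P + nm R"
  unfolding nm_def by (simp add: sum.distrib[symmetric] sum_mono abs_triangle_ineq)
lemma nm_diff: "nm (P - R) \<le> nm P + nm R"
  unfolding nm_def by (simp add: sum.distrib[symmetric] sum_mono abs_triangle_ineq4)
lemma nm_minus: "nm (- P) = nm P" by (simp add: nm_def)
lemma nm_mm: "nm (mm P R) \<le> nm P * nm R"
proof -
  have "nm (mm P R) = (\<Sum>x\<in>B. \<Sum>z\<in>B. \<bar>\<Sum>y\<in>B. P x y * R y z\<bar>)"
    by (simp add: nm_def mm_def)
  also have "\<dots> \<le> (\<Sum>x\<in>B. \<Sum>z\<in>B. \<Sum>y\<in>B. \<bar>P x y\<bar> * \<bar>R y z\<bar>)"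
    by (intro sum_mono order_trans[OF sum_abs]) (simp add: abs_mult)
  also have "\<dots> = (\<Sum>x\<in>B. \<Sum>y\<in>B. \<bar>P x y\<bar> * (\<Sum>z\<in>B. \<bar>R y z\<bar>))"
    by (rule sum.cong[OF refl], subst sum.swap, simp add: sum_distrib_left)
  also have "\<dots> \<le> (\<Sum>x\<in>B. \<Sum>y\<in>B. \<bar>P x y\<bar> * nm R)"
  proof (intro sum_mono mult_left_mono)
    fix y assume "y \<in> B"
    then show "(\<Sum>z\<in>B. \<bar>R y z\<bar>) \<le> nm R" unfolding nm_def
      using finB by (intro member_le_sum[where f="\<lambda>y. \<Sum>z\<in>B. \<bar>R y z\<bar>"]) (auto intro: sum_nonneg)
  qed auto
  also have "\<dots> = nm P * nm R" by (simp add: nm_def sum_distrib_right)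
  finally show ?thesis .
qed


definition bf :: "(box \<Rightarrow> real) \<Rightarrow> bmat \<Rightarrow> (box \<Rightarrow> real) \<Rightarrow> real" where
  "bf a M b = (\<Sum>x\<in>B. \<Sum>y\<in>B. a x * M x y * b y)"
definition symB :: "bmat \<Rightarrow> bool" where
  "symB M \<longleftrightarrow> (\<forall>x\<in>B. \<forall>y\<in>B. M x y = M y x)"

lemma qf_bf: "qf v M = bf v M v" by (simp add: qf_def bf_def)
lemma bf_alt: "bf a M b = (\<Sum>x\<in>B. a x * (\<Sum>y\<in>B. M x y * b y))"
  by (simp add: bf_def sum_distrib_left mult.assoc)
lemma bf_sym: "symB M \<Longrightarrow> bf a M b = bf b M a"
  unfolding bf_def symB_def
  by (subst sum.swap) (auto intro!: sum.cong simp: mult.commute mult.left_commute)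
lemma bf_expand: "bf (\<lambda>x. a x + r * b x) M (\<lambda>x. a x + r * b x) =
   bf a M a + r * bf a M b + r * bf b M a + r\<^sup>2 * bf b M b"
  by (simp add: bf_def algebra_simps sum.distrib sum_distrib_left power2_eq_square)

lemma eig:
  assumes sym: "symB M" and psd: "\<And>w. 0 \<le> qf w M" and zero: "qf v M = 0"
  shows "\<forall>x\<in>B. (\<Sum>y\<in>B. M x y * v y) = 0"
proof -
  define u where "u x = (\<Sum>y\<in>B. M x y * v y)" for x
  define s where "s = (\<Sum>x\<in>B. u x * u x)"
  define q where "q = bf u M u"
  have s1: "bf u M v = s" by (simp add: bf_alt s_def u_def)
  have s2: "bf v M u = s" using s1 bf_sym[OF sym] by metis
  have q0: "0 \<le> q" using psd[of u] by (simp add: q_def qf_bf)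
  have key: "0 \<le> 2 * r * s + r\<^sup>2 * q" for r
    using psd[of "\<lambda>x. v x + r * u x"] zero
    by (simp add: qf_bf bf_expand s1 s2 q_def[symmetric] algebra_simps)
  have s0: "0 \<le> s" by (simp add: s_def sum_nonneg)
  have "s = 0"
  proof (rule ccontr)
    assume "s \<noteq> 0" then have sp: "s > 0" using s0 by simp
    define r where "r = - s / (q + 1)"
    have rq: "r * (q + 1) = - s" using q0 by (simp add: r_def)
    have "(2 * r * s + r\<^sup>2 * q) * (q + 1)\<^sup>2 = 2 * s * (r * (q + 1)) * (q + 1) + (r * (q + 1))\<^sup>2 * q"
      by (simp add: power2_eq_square algebra_simps)
    also have "\<dots> = - (s\<^sup>2 * (q + 2))" unfolding rq by (simp add: power2_eq_square algebra_simps)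
    also have "\<dots> < 0" using q0 sp by (simp add: mult_pos_pos)
    finally have "2 * r * s + r\<^sup>2 * q < 0" using q0
      by (metis mult_nonneg_nonneg not_less zero_le_power2)
    then show False using key[of r] by simp
  qed
  then have "\<forall>x\<in>B. u x * u x = 0"
    using finB by (subst (asm) s_def, subst (asm) sum_nonneg_eq_0_iff) auto
  then show ?thesis by (simp add: u_def)
qed

definition Kset :: "(box \<Rightarrow> real) set" where
  "Kset = (PiE UNIV (\<lambda>x. if x \<in> B then {-1..1} else {0})) \<inter> {v. (\<Sum>x\<in>B. (v x)\<^sup>2) = 1}"

lemma compact_Kset: "compact Kset"
proof -
  have "compactin (product_topology (\<lambda>i. euclidean) UNIV)
      (PiE UNIV (\<lambda>x. if x \<in> B then {-1..1::real} else {0}))"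
    by (subst compactin_PiE) (auto simp: compactin_euclidean_iff)
  then have c: "compact (PiE UNIV (\<lambda>x. if x \<in> B then {-1..1::real} else {0}))"
    by (simp add: euclidean_product_topology compactin_euclidean_iff)
  have "closed {v :: box \<Rightarrow> real. (\<Sum>x\<in>B. (v x)\<^sup>2) = 1}"
    by (intro closed_Collect_eq continuous_intros) (auto intro: continuous_on_subset[OF continuous_on_product_coordinates])
  from compact_Int_closed[OF c this] show ?thesis unfolding Kset_def .
qed

lemma Kset_le1: "v \<in> Kset \<Longrightarrow> x \<in> B \<Longrightarrow> \<bar>v x\<bar> \<le> 1"
proof -
  assume "v \<in> Kset" "x \<in> B"
  then have "v \<in> (\<Pi>\<^sub>E x\<in>UNIV. if x \<in> B then {- 1..1::real} else {0})" "x \<in> B" unfolding Kset_def by auto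
  then have "v x \<in> (if x \<in> B then {- 1..1::real} else {0})" using PiE_mem[of v UNIV _ x] by blast
  then have "v x \<in> {-1..1}" using \<open>x \<in> B\<close> by simp
  then show ?thesis by auto
qed

lemma Kset_ne: "B \<noteq> {} \<Longrightarrow> Kset \<noteq> {}"
proof -
  assume "B \<noteq> {}" then obtain b where b: "b \<in> B" by auto
  define v where "v = (\<lambda>x. if x = b then 1 else (0::real))"
  have "(\<Sum>x\<in>B. (v x)\<^sup>2) = (\<Sum>x\<in>B. if x = b then 1 else 0)"
    by (intro sum.cong) (auto simp: v_def)
  also have "\<dots> = 1" using b finB by simp
  finally have "v \<in> Kset" using b by (auto simp: Kset_def v_def PiE_def)
  then show ?thesis by auto
qed

lemma qf_cont: "continuous_on S (\<lambda>v. qf v M)"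
  unfolding qf_def by (intro continuous_intros) (auto intro: continuous_on_subset[OF continuous_on_product_coordinates])

lemma qf_bound: "v \<in> Kset \<Longrightarrow> \<bar>qf v M\<bar> \<le> nm M"
proof -
  assume v: "v \<in> Kset"
  have "\<bar>qf v M\<bar> \<le> (\<Sum>x\<in>B. \<Sum>y\<in>B. \<bar>v x * M x y * v y\<bar>)"
    unfolding qf_def by (intro order_trans[OF sum_abs] sum_mono sum_abs)
  also have "\<dots> \<le> nm M" unfolding nm_def
  proof (intro sum_mono)
    fix x y assume "x \<in> B" "y \<in> B"
    then have "\<bar>v x\<bar> \<le> 1" "\<bar>v y\<bar> \<le> 1" using v Kset_le1 by auto
    then have "\<bar>v x\<bar> * \<bar>M x y\<bar> * \<bar>v y\<bar> \<le> 1 * \<bar>M x y\<bar> * 1"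
      by (intro mult_mono) auto
    then show "\<bar>v x * M x y * v y\<bar> \<le> \<bar>M x y\<bar>" by (simp add: abs_mult)
  qed
  finally show ?thesis .
qed

lemma qf_diff: "qf v M - qf v N = qf v (M - N)"
  by (simp add: qf_def algebra_simps sum_subtractf)
lemma qf_scale: "qf (\<lambda>x. c * v x) M = c\<^sup>2 * qf v M"
  by (simp add: qf_def sum_distrib_left power2_eq_square algebra_simps)

lemmas mm_simps = mm_assoc mm_add_l mm_add_r mm_diff_l mm_diff_r mm_minus_l mm_minus_r
  mm_zero_l mm_zero_r mm_rs_l mm_rs_r
lemmas tr_simps = tr_mm tr_add tr_diff tr_minus tr_tr tr_zero tr_Idm

end


lemma cont_right:
  fixes f :: "real \<Rightarrow> real"
  assumes ac: "a < c" and l: "(f \<longlongrightarrow> f a) (at_right a)"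
    and i: "\<And>t. t \<in> {a<..c} \<Longrightarrow> isCont f t"
  shows "continuous_on {a..c} f"
  unfolding continuous_on_eq_continuous_within
proof
  fix t assume t: "t \<in> {a..c}"
  show "continuous (at t within {a..c}) f"
  proof (cases "t = a")
    case True
    have "(f \<longlongrightarrow> f t) (at t within {a..c})" using l True at_within_Icc_at_right[OF ac] by simp
    then show ?thesis unfolding continuous_within .
  next
    case False
    then have "t \<in> {a<..c}" using t by auto
    from i[OF this] show ?thesis by (rule continuous_at_imp_continuous_within)
  qed
qed

context fb begin

lemma qf_cong: "(\<And>x. x \<in> B \<Longrightarrow> w x = w' x) \<Longrightarrow> qf w N = qf w' N"
  unfolding qf_def by (intro sum.cong refl) auto
lemma qf_add: "qf w (M + N) = qf w M + qf w N"
  by (simp add: qf_def algebra_simps sum.distrib)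
lemma qf_zero_vec: "(\<And>x. x \<in> B \<Longrightarrow> w x = 0) \<Longrightarrow> qf w N = 0"
  unfolding qf_def by simp
lemma qf_Idm: "qf w (\<lambda>x y. c * Idm x y) = c * (\<Sum>x\<in>B. (w x)\<^sup>2)"
proof -
  have "qf w (\<lambda>x y. c * Idm x y) = (\<Sum>x\<in>B. \<Sum>y\<in>B. if y = x then c * (w x)\<^sup>2 else 0)"
    unfolding qf_def by (intro sum.cong refl) (auto simp: Idm_def power2_eq_square)
  also have "\<dots> = c * (\<Sum>x\<in>B. (w x)\<^sup>2)" using finB by (simp add: sum_distrib_left)
  finally show ?thesis .
qed
lemma qf_tr: "qf w (mtrans N) = qf w N"
  unfolding qf_def mtrans_def by (subst sum.swap) (simp add: mult.commute mult.left_commute)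

lemma Kset_scale:
  assumes h: "\<And>w. w \<in> Kset \<Longrightarrow> c \<le> qf w N"
  shows "c * (\<Sum>x\<in>B. (w x)\<^sup>2) \<le> qf w N"
proof (cases "(\<Sum>x\<in>B. (w x)\<^sup>2) = 0")
  case True
  then have "\<forall>x\<in>B. (w x)\<^sup>2 = 0" using finB by (subst (asm) sum_nonneg_eq_0_iff) auto
  then have "qf w N = 0" by (intro qf_zero_vec) auto
  then show ?thesis using True by simp
next
  case False
  define S where "S = (\<Sum>x\<in>B. (w x)\<^sup>2)"
  have Sp: "S > 0" using False by (simp add: S_def sum_nonneg order_le_neq_trans)
  define r where "r = sqrt S"
  have rp: "r > 0" using Sp by (simp add: r_def)
  have r2: "r\<^sup>2 = S" using Sp by (simp add: r_def)
  define w' where "w' x = (if x \<in> B then w x / r else 0)" for x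
  have sw: "(\<Sum>x\<in>B. (w' x)\<^sup>2) = 1"
  proof -
    have "(\<Sum>x\<in>B. (w' x)\<^sup>2) = (\<Sum>x\<in>B. (w x)\<^sup>2 / r\<^sup>2)"
      by (intro sum.cong refl) (simp add: w'_def power_divide)
    also have "\<dots> = S / r\<^sup>2" by (simp add: S_def sum_divide_distrib)
    finally show ?thesis using r2 Sp by simp
  qed
  have le1: "\<bar>w' x\<bar> \<le> 1" if x: "x \<in> B" for x
  proof -
    have "(w' x)\<^sup>2 \<le> (\<Sum>x\<in>B. (w' x)\<^sup>2)"
      using x finB by (intro member_le_sum) auto
    then have "(w' x)\<^sup>2 \<le> 1\<^sup>2" using sw by simp
    then show ?thesis using abs_le_square_iff[of "w' x" 1] by simp
  qed
  have m: "w' x \<in> (if x \<in> B then {-1..1} else {0})" for x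
  proof (cases "x \<in> B")
    case True then show ?thesis using le1[OF True] by (simp add: abs_le_iff)
  next
    case False then show ?thesis by (simp add: w'_def)
  qed
  have "w' \<in> Kset" unfolding Kset_def using sw m by (simp add: PiE_iff)
  then have "c \<le> qf w' N" by (rule h)
  have "qf w N = qf (\<lambda>x. r * w' x) N" using rp by (intro qf_cong) (simp add: w'_def)
  also have "\<dots> = r\<^sup>2 * qf w' N" by (rule qf_scale)
  finally have "qf w N = S * qf w' N" using r2 by simp
  then show ?thesis using \<open>c \<le> qf w' N\<close> Sp unfolding S_def[symmetric]
    by (simp add: mult.commute mult_left_mono)
qed

lemma qf_mm_eig:
  assumes e: "\<And>x. x \<in> B \<Longrightarrow> (\<Sum>y\<in>B. M x y * v y) = c * v x"
  shows "qf v (mm C M) = c * qf v C"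
proof -
  have "qf v (mm C M) = (\<Sum>x\<in>B. v x * (\<Sum>z\<in>B. mm C M x z * v z))"
    by (simp add: qf_bf bf_alt)
  also have "\<dots> = (\<Sum>x\<in>B. v x * (c * (\<Sum>y\<in>B. C x y * v y)))"
  proof (intro sum.cong refl arg_cong2[where f="(*)"])
    fix x assume x: "x \<in> B"
    have "(\<Sum>z\<in>B. mm C M x z * v z) = (\<Sum>z\<in>B. \<Sum>y\<in>B. C x y * M y z * v z)"
      using x by (simp add: mm_def sum_distrib_right)
    also have "\<dots> = (\<Sum>y\<in>B. C x y * (\<Sum>z\<in>B. M y z * v z))"
      by (subst sum.swap) (simp add: sum_distrib_left mult.assoc)
    also have "\<dots> = (\<Sum>y\<in>B. C x y * (c * v y))" using e by simp
    also have "\<dots> = c * (\<Sum>y\<in>B. C x y * v y)" by (simp add: sum_distrib_left algebra_simps)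
    finally show "(\<Sum>z\<in>B. mm C M x z * v z) = c * (\<Sum>y\<in>B. C x y * v y)" .
  qed
  also have "\<dots> = c * qf v C" by (simp add: qf_bf bf_alt sum_distrib_left algebra_simps)
  finally show ?thesis .
qed

lemma mm_tr_sym: "symB M \<Longrightarrow> mm X (mtrans M) = mm X M"
proof -
  assume s: "symB M"
  show ?thesis unfolding mm_def mtrans_def
  proof (intro ext)
    fix x z
    have "(\<Sum>y\<in>B. X x y * M z y) = (\<Sum>y\<in>B. X x y * M y z)" if "z \<in> B"
      using s that unfolding symB_def by (intro sum.cong refl) metis
    then show "(if x \<in> B \<and> z \<in> B then \<Sum>y\<in>B. X x y * M z y else 0) =
      (if x \<in> B \<and> z \<in> B then \<Sum>y\<in>B. X x y * M y z else 0)" by auto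
  qed
qed

end


context fb begin

lemma Kset_sum1: "v \<in> Kset \<Longrightarrow> (\<Sum>x\<in>B. (v x)\<^sup>2) = 1" by (simp add: Kset_def)

lemma Idm_sum: "x \<in> B \<Longrightarrow> (\<Sum>y\<in>B. Idm x y * v y) = v x"
proof -
  assume x: "x \<in> B"
  have "(\<Sum>y\<in>B. Idm x y * v y) = (\<Sum>y\<in>B. if y = x then v x else 0)"
    by (intro sum.cong refl) (auto simp: Idm_def)
  then show ?thesis using x finB by simp
qed

lemma nm_bound: "(\<And>x y. \<bar>M x y\<bar> \<le> K) \<Longrightarrow> nm M \<le> real (card B) ^ 2 * K"
proof -
  assume h: "\<And>x y. \<bar>M x y\<bar> \<le> K"
  have "nm M \<le> (\<Sum>x\<in>B. real (card B) * K)" unfolding nm_def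
    by (intro sum_mono sum_bounded_above h)
  also have "\<dots> = real (card B) ^ 2 * K" by (simp add: power2_eq_square)
  finally show ?thesis .
qed

lemma prop_psd:
  fixes M C :: "real \<Rightarrow> bmat" and M0 :: bmat and a b K t0 :: real
  assumes ab: "a < b"
    and lim0: "\<And>x y. ((\<lambda>s. M s x y) \<longlongrightarrow> M0 x y) (at_right a)"
    and der: "\<And>t. t \<in> {a<..<b} \<Longrightarrow> mderiv M (mm (C t) (M t) + mm (M t) (mtrans (C t))) t"
    and bnd: "\<And>t x y. t \<in> {a<..<b} \<Longrightarrow> \<bar>C t x y\<bar> \<le> K"
    and sym: "\<And>t. t \<in> {a<..<b} \<Longrightarrow> symB (M t)"
    and psd0: "\<And>v. 0 \<le> qf v M0"
    and t0: "t0 \<in> {a<..<b}"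
  shows "0 \<le> qf w (M t0)"
proof (cases "B = {}")
  case True then show ?thesis unfolding qf_def by simp
next
  case Bne: False
  define Me where "Me s = (if s = a then M0 else M s)" for s
  have Mea: "Me a = M0" by (simp add: Me_def)
  have MeM: "s \<noteq> a \<Longrightarrow> Me s = M s" for s by (simp add: Me_def)
  have contMe: "continuous_on {a..t0} (\<lambda>s. Me s x y)" for x y
  proof (rule cont_right)
    show "a < t0" using t0 by simp
    have ev: "eventually (\<lambda>s. M s x y = Me s x y) (at_right a)"
      unfolding eventually_at_filter by (simp add: MeM)
    show "((\<lambda>s. Me s x y) \<longlongrightarrow> Me a x y) (at_right a)"
      unfolding Mea using Lim_transform_eventually[OF lim0 ev] .
  next
    fix t assume t: "t \<in> {a<..t0}"
    then have "t \<in> {a<..<b}" using t0 by auto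
    from mderiv_isCont[OF der[OF this]] have "isCont (\<lambda>s. M s x y) t" .
    moreover have "eventually (\<lambda>s. M s x y = Me s x y) (nhds t)"
      using eventually_nhds_in_open[of "{a<..}" t] t by (auto elim!: eventually_mono simp: MeM)
    ultimately show "isCont (\<lambda>s. Me s x y) t" using isCont_cong[of "\<lambda>s. M s x y" "\<lambda>s. Me s x y" t] by simp
  qed
  define L where "L = 2 * K * real (card B) ^ 2 + 1"
  have Kc: "compact Kset" "Kset \<noteq> {}" using compact_Kset Kset_ne Bne by auto
  have ex: "\<exists>v. v \<in> Kset \<and> (\<forall>w\<in>Kset. qf v (Me s) \<le> qf w (Me s))" for s
    using continuous_attains_inf[OF Kc qf_cont] by blast
  define vmin where "vmin s = (SOME v. v \<in> Kset \<and> (\<forall>w\<in>Kset. qf v (Me s) \<le> qf w (Me s)))" for s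
  have vm1: "vmin s \<in> Kset" for s
    using someI_ex[OF ex[of s]] unfolding vmin_def by auto
  have vm2: "w \<in> Kset \<Longrightarrow> qf (vmin s) (Me s) \<le> qf w (Me s)" for s w
    using someI_ex[OF ex[of s]] unfolding vmin_def by auto
  define m where "m s = qf (vmin s) (Me s)" for s
  have mle: "\<bar>m t - m s\<bar> \<le> nm (Me t - Me s)" for t s
  proof -
    have "m t \<le> qf (vmin s) (Me t)" using vm2[OF vm1[of s], of t] by (simp add: m_def)
    also have "\<dots> = m s + qf (vmin s) (Me t - Me s)" by (simp add: m_def qf_diff[symmetric])
    also have "\<dots> \<le> m s + nm (Me t - Me s)" using qf_bound[OF vm1[of s], of "Me t - Me s"] by simp
    finally have 1: "m t - m s \<le> nm (Me t - Me s)" by simp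
    have "m s \<le> qf (vmin t) (Me s)" using vm2[OF vm1[of t], of s] by (simp add: m_def)
    also have "\<dots> = m t - qf (vmin t) (Me t - Me s)" by (simp add: m_def qf_diff[symmetric])
    also have "\<dots> \<le> m t + nm (Me t - Me s)" using qf_bound[OF vm1[of t], of "Me t - Me s"] by simp
    finally show ?thesis using 1 by linarith
  qed
  have nmc: "continuous_on {a..t0} (\<lambda>t. nm (Me t - Me s))" for s
  proof -
    have "(\<lambda>t. nm (Me t - Me s)) = (\<lambda>t. \<Sum>x\<in>B. \<Sum>y\<in>B. \<bar>Me t x y - Me s x y\<bar>)"
      by (simp add: nm_def)
    then show ?thesis by (simp only:) (intro continuous_intros contMe)
  qed
  have mcont: "continuous_on {a..t0} m"
    unfolding continuous_on_def
  proof
    fix s assume s: "s \<in> {a..t0}"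
    have "((\<lambda>t. nm (Me t - Me s)) \<longlongrightarrow> nm (Me s - Me s)) (at s within {a..t0})"
      using nmc[of s] s unfolding continuous_on_def by blast
    then have z: "((\<lambda>t. nm (Me t - Me s)) \<longlongrightarrow> 0) (at s within {a..t0})" by (simp add: nm_def)
    have "((\<lambda>t. m t - m s) \<longlongrightarrow> 0) (at s within {a..t0})"
      by (rule Lim_null_comparison[OF _ z]) (simp add: mle)
    then show "(m \<longlongrightarrow> m s) (at s within {a..t0})" by (simp add: LIM_zero_iff)
  qed

  have main: "m s + \<epsilon> * exp (L * (s - a)) > 0" if ep: "\<epsilon> > 0" and s: "s \<in> {a..t0}" for \<epsilon> s
  proof (rule ccontr)
    define g where "g s = m s + \<epsilon> * exp (L * (s - a))" for s
    have gc: "continuous_on {a..t0} g" unfolding g_def by (intro continuous_intros mcont)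
    assume "\<not> ?thesis"
    then have gs: "g s \<le> 0" by (simp add: g_def)
    define S where "S = {t \<in> {a..t0}. g t \<le> 0}"
    have Sne: "S \<noteq> {}" using s gs by (auto simp: S_def)
    have "S = {a..t0} \<inter> g -` {..0}" by (auto simp: S_def)
    then have Sclosed: "closed S" using continuous_closed_preimage[OF gc] by simp
    have Sbdd: "bdd_below S" unfolding bdd_below_def S_def by auto
    define \<tau> where "\<tau> = Inf S"
    have \<tau>S: "\<tau> \<in> S" using closed_contains_Inf[OF Sne Sbdd Sclosed] by (simp add: \<tau>_def)
    have \<tau>le: "\<tau> \<le> t" if "t \<in> S" for t using cInf_lower[OF that Sbdd] by (simp add: \<tau>_def)
    have ga: "g a > 0"
    proof -
      have "m a \<ge> 0" using psd0 by (simp add: m_def Mea)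
      then show ?thesis using ep by (simp add: g_def)
    qed
    have \<tau>r: "a \<le> \<tau>" "\<tau> \<le> t0" using \<tau>S by (auto simp: S_def)
    have g\<tau>: "g \<tau> = 0"
    proof -
      have "g \<tau> \<le> 0" using \<tau>S by (simp add: S_def)
      moreover have "continuous_on {a..\<tau>} g" using continuous_on_subset[OF gc, of "{a..\<tau>}"] \<tau>r by auto
      ultimately obtain x where x: "a \<le> x" "x \<le> \<tau>" "g x = 0"
        using IVT2'[of g \<tau> 0 a] ga \<tau>r by force
      then have "x \<in> S" using \<tau>r by (auto simp: S_def)
      then have "x = \<tau>" using \<tau>le x by force
      then show ?thesis using x by simp
    qed
    have \<tau>a: "a < \<tau>" using g\<tau> ga \<tau>r(1) by (cases "\<tau> = a") auto
    have gpos: "g t > 0" if "a \<le> t" "t < \<tau>" for t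
    proof (rule ccontr)
      assume "\<not> g t > 0"
      then have "t \<in> S" using that \<tau>r by (auto simp: S_def)
      then show False using \<tau>le[of t] that by simp
    qed
    have \<tau>in: "\<tau> \<in> {a<..<b}" using \<tau>a \<tau>r t0 by auto
    define v where "v = vmin \<tau>"
    define lt where "lt = \<epsilon> * exp (L * (\<tau> - a))"
    have ltp: "lt > 0" using ep by (simp add: lt_def)
    have vK: "v \<in> Kset" by (simp add: v_def vm1)
    have Me\<tau>: "Me \<tau> = M \<tau>" using \<tau>a by (simp add: MeM)
    have qv: "qf v (M \<tau>) = - lt" using g\<tau> by (simp add: g_def m_def lt_def v_def Me\<tau>)
    have lower: "- lt \<le> qf w (M \<tau>)" if "w \<in> Kset" for w
      using vm2[OF that, of \<tau>] qv by (simp add: v_def Me\<tau>)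
    define P where "P = M \<tau> + (\<lambda>x y. lt * Idm x y)"
    have Ppsd: "0 \<le> qf w P" for w
      using Kset_scale[OF lower, of w] by (simp add: P_def qf_add qf_Idm)
    have Pv: "qf v P = 0" using qv Kset_sum1[OF vK] by (simp add: P_def qf_add qf_Idm)
    have Psym: "symB P" unfolding symB_def
    proof (intro ballI)
      fix x y assume xy: "x \<in> B" "y \<in> B"
      have "M \<tau> x y = M \<tau> y x" using sym[OF \<tau>in] xy unfolding symB_def by blast
      then show "P x y = P y x" using xy by (simp add: P_def Idm_def)
    qed
    have eP: "\<forall>x\<in>B. (\<Sum>y\<in>B. P x y * v y) = 0" by (rule eig[OF Psym Ppsd Pv])
    have e: "(\<Sum>y\<in>B. M \<tau> x y * v y) = (- lt) * v x" if x: "x \<in> B" for x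
    proof -
      have "(\<Sum>y\<in>B. P x y * v y) = (\<Sum>y\<in>B. M \<tau> x y * v y) + lt * (\<Sum>y\<in>B. Idm x y * v y)"
        by (simp add: P_def algebra_simps sum.distrib sum_distrib_left)
      then show ?thesis using eP x Idm_sum[OF x] by simp
    qed
    define D where "D = mm (C \<tau>) (M \<tau>) + mm (M \<tau>) (mtrans (C \<tau>))"
    have qD: "qf v D = 2 * ((- lt) * qf v (C \<tau>))"
    proof -
      have 1: "qf v (mm (C \<tau>) (M \<tau>)) = (- lt) * qf v (C \<tau>)" by (rule qf_mm_eig[OF e])
      have "qf v (mm (M \<tau>) (mtrans (C \<tau>))) = qf v (mtrans (mm (M \<tau>) (mtrans (C \<tau>))))"
        by (simp add: qf_tr)
      also have "\<dots> = qf v (mm (C \<tau>) (M \<tau>))"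
        by (simp add: tr_mm tr_tr mm_tr_sym[OF sym[OF \<tau>in]])
      finally show ?thesis using 1 by (simp add: D_def qf_add)
    qed
    have nC: "\<bar>qf v (C \<tau>)\<bar> \<le> real (card B) ^ 2 * K"
      using qf_bound[OF vK, of "C \<tau>"] nm_bound[of "C \<tau>" K] bnd[OF \<tau>in] by fastforce
    define h where "h s = qf v (M s) + \<epsilon> * exp (L * (s - a))" for s
    have dq: "((\<lambda>s. qf v (M s)) has_real_derivative qf v D) (at \<tau>)"
    proof -
      have d: "\<And>x y. ((\<lambda>s. M s x y) has_real_derivative D x y) (at \<tau>)"
        using der[OF \<tau>in] unfolding mderiv_def D_def by blast
      show ?thesis unfolding qf_def
        by (intro DERIV_sum DERIV_cmult_right DERIV_cmult d)
    qed
    have dh: "(h has_real_derivative (qf v D + \<epsilon> * (exp (L * (\<tau> - a)) * L))) (at \<tau>)"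
    proof -
      have de: "((\<lambda>s. \<epsilon> * exp (L * (s - a))) has_real_derivative \<epsilon> * (exp (L * (\<tau> - a)) * L)) (at \<tau>)"
        by (auto intro!: derivative_eq_intros)
      show ?thesis unfolding h_def by (rule DERIV_add[OF dq de])
    qed
    have hpos: "qf v D + \<epsilon> * (exp (L * (\<tau> - a)) * L) > 0"
    proof -
      have "qf v D + \<epsilon> * (exp (L * (\<tau> - a)) * L) = lt * (L - 2 * qf v (C \<tau>))"
        by (simp add: qD lt_def algebra_simps)
      moreover have "L - 2 * qf v (C \<tau>) \<ge> 1" using nC by (simp add: L_def abs_le_iff mult.commute)
      ultimately show ?thesis using ltp by simp
    qed
    obtain d where d: "d > 0" "\<And>hh. hh > 0 \<Longrightarrow> hh < d \<Longrightarrow> h (\<tau> - hh) < h \<tau>"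
      using DERIV_pos_inc_left[OF dh hpos] by blast
    define hh where "hh = min d (\<tau> - a) / 2"
    have hh: "hh > 0" "hh < d" "hh < \<tau> - a" using d(1) \<tau>a by (auto simp: hh_def)
    have h\<tau>: "h \<tau> = 0" using qv by (simp add: h_def lt_def)
    have "h (\<tau> - hh) < 0" using d(2)[OF hh(1,2)] h\<tau> by simp
    moreover have "h (\<tau> - hh) \<ge> g (\<tau> - hh)"
    proof -
      have ne: "\<tau> - hh \<noteq> a" using hh by simp
      have "m (\<tau> - hh) \<le> qf v (M (\<tau> - hh))"
        using vm2[OF vK, of "\<tau> - hh"] by (simp add: m_def MeM[OF ne])
      then show ?thesis by (simp add: h_def g_def)
    qed
    moreover have "g (\<tau> - hh) > 0" using hh by (intro gpos) auto
    ultimately show False by simp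
  qed
  have Kpos: "0 \<le> qf w (M t0)" if w: "w \<in> Kset" for w
  proof (rule ccontr)
    assume "\<not> ?thesis"
    then have q: "qf w (M t0) < 0" by simp
    define \<epsilon> where "\<epsilon> = - qf w (M t0) / (2 * exp (L * (t0 - a)))"
    have ep: "\<epsilon> > 0" using q by (simp add: \<epsilon>_def divide_neg_pos)
    have epe: "\<epsilon> * exp (L * (t0 - a)) = - qf w (M t0) / 2" by (simp add: \<epsilon>_def)
    have "m t0 \<le> qf w (M t0)" using vm2[OF w, of t0] t0 by (simp add: m_def MeM)
    moreover have "m t0 + \<epsilon> * exp (L * (t0 - a)) > 0" using main[OF ep] t0 by simp
    ultimately show False using q epe by linarith
  qed
  show ?thesis using Kset_scale[of 0 "M t0" w] Kpos by simp
qed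

end

context fb begin

definition fro :: "bmat \<Rightarrow> real" where
  "fro M = (\<Sum>x\<in>B. \<Sum>y\<in>B. (M x y)\<^sup>2)"

lemma fro_nonneg: "0 \<le> fro M" by (simp add: fro_def sum_nonneg)

lemma amgm3a: "(\<Sum>x\<in>B. \<Sum>y\<in>B. \<Sum>z\<in>B. \<bar>f x y\<bar> * \<bar>f z y\<bar>) \<le> real (card B) * fro f"
proof -
  have "(\<Sum>x\<in>B. \<Sum>y\<in>B. \<Sum>z\<in>B. \<bar>f x y\<bar> * \<bar>f z y\<bar>)
      \<le> (\<Sum>x\<in>B. \<Sum>y\<in>B. \<Sum>z\<in>B. ((f x y)\<^sup>2 + (f z y)\<^sup>2) / 2)"
  proof (intro sum_mono)
    fix x y z
    have "0 \<le> (\<bar>f x y\<bar> - \<bar>f z y\<bar>)\<^sup>2" by simp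
    then show "\<bar>f x y\<bar> * \<bar>f z y\<bar> \<le> ((f x y)\<^sup>2 + (f z y)\<^sup>2) / 2"
      by (simp add: power2_eq_square algebra_simps)
  qed
  also have "\<dots> = ((\<Sum>x\<in>B. \<Sum>y\<in>B. \<Sum>z\<in>B. (f x y)\<^sup>2) + (\<Sum>x\<in>B. \<Sum>y\<in>B. \<Sum>z\<in>B. (f z y)\<^sup>2)) / 2"
    by (simp add: sum.distrib sum_divide_distrib[symmetric] add_divide_distrib)
  also have "(\<Sum>x\<in>B. \<Sum>y\<in>B. \<Sum>z\<in>B. (f x y)\<^sup>2) = real (card B) * fro f"
    by (simp add: fro_def sum_distrib_left mult.commute)
  also have "(\<Sum>x\<in>B. \<Sum>y\<in>B. \<Sum>z\<in>B. (f z y)\<^sup>2) = real (card B) * fro f"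
    by (simp add: fro_def) (subst sum.swap, simp)
  finally show ?thesis by simp
qed

lemma amgm3b: "(\<Sum>x\<in>B. \<Sum>y\<in>B. \<Sum>z\<in>B. \<bar>f x y\<bar> * \<bar>f x z\<bar>) \<le> real (card B) * fro f"
proof -
  have "(\<Sum>x\<in>B. \<Sum>y\<in>B. \<Sum>z\<in>B. \<bar>f x y\<bar> * \<bar>f x z\<bar>)
      \<le> (\<Sum>x\<in>B. \<Sum>y\<in>B. \<Sum>z\<in>B. ((f x y)\<^sup>2 + (f x z)\<^sup>2) / 2)"
  proof (intro sum_mono)
    fix x y z
    have "0 \<le> (\<bar>f x y\<bar> - \<bar>f x z\<bar>)\<^sup>2" by simp
    then show "\<bar>f x y\<bar> * \<bar>f x z\<bar> \<le> ((f x y)\<^sup>2 + (f x z)\<^sup>2) / 2"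
      by (simp add: power2_eq_square algebra_simps)
  qed
  also have "\<dots> = ((\<Sum>x\<in>B. \<Sum>y\<in>B. \<Sum>z\<in>B. (f x y)\<^sup>2) + (\<Sum>x\<in>B. \<Sum>y\<in>B. \<Sum>z\<in>B. (f x z)\<^sup>2)) / 2"
    by (simp add: sum.distrib sum_divide_distrib[symmetric] add_divide_distrib)
  also have "(\<Sum>x\<in>B. \<Sum>y\<in>B. \<Sum>z\<in>B. (f x y)\<^sup>2) = real (card B) * fro f"
    by (simp add: fro_def sum_distrib_left mult.commute)
  also have "(\<Sum>x\<in>B. \<Sum>y\<in>B. \<Sum>z\<in>B. (f x z)\<^sup>2) = real (card B) * fro f"
    by (simp add: fro_def sum_distrib_left mult.commute)
  finally show ?thesis by simp
qed

lemma lin_bound: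
  assumes c1: "\<And>x y. \<bar>C1 x y\<bar> \<le> K" and c2: "\<And>x y. \<bar>C2 x y\<bar> \<le> K"
  shows "\<bar>\<Sum>x\<in>B. \<Sum>y\<in>B. M x y * (mm C1 M + mm M C2) x y\<bar> \<le> 2 * K * real (card B) * fro M"
proof -
  have K0: "0 \<le> K" using c1[of undefined undefined] by simp
  have "\<bar>\<Sum>x\<in>B. \<Sum>y\<in>B. M x y * (mm C1 M + mm M C2) x y\<bar>
     \<le> (\<Sum>x\<in>B. \<Sum>y\<in>B. \<bar>M x y * (mm C1 M + mm M C2) x y\<bar>)"
    by (intro order_trans[OF sum_abs] sum_mono sum_abs)
  also have "\<dots> \<le> (\<Sum>x\<in>B. \<Sum>y\<in>B. (\<Sum>z\<in>B. K * (\<bar>M x y\<bar> * \<bar>M z y\<bar>)) + (\<Sum>z\<in>B. K * (\<bar>M x y\<bar> * \<bar>M x z\<bar>)))"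
  proof (intro sum_mono)
    fix x y assume xy: "x \<in> B" "y \<in> B"
    have e: "(mm C1 M + mm M C2) x y = (\<Sum>z\<in>B. C1 x z * M z y) + (\<Sum>z\<in>B. M x z * C2 z y)"
      using xy by (simp add: mm_def)
    have "\<bar>M x y * (mm C1 M + mm M C2) x y\<bar> \<le> \<bar>M x y\<bar> * (\<bar>\<Sum>z\<in>B. C1 x z * M z y\<bar> + \<bar>\<Sum>z\<in>B. M x z * C2 z y\<bar>)"
      unfolding e abs_mult by (intro mult_left_mono abs_triangle_ineq) auto
    also have "\<dots> \<le> \<bar>M x y\<bar> * ((\<Sum>z\<in>B. K * \<bar>M z y\<bar>) + (\<Sum>z\<in>B. K * \<bar>M x z\<bar>))"
    proof (intro mult_left_mono add_mono)
      show "\<bar>\<Sum>z\<in>B. C1 x z * M z y\<bar> \<le> (\<Sum>z\<in>B. K * \<bar>M z y\<bar>)"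
        by (intro order_trans[OF sum_abs] sum_mono) (simp add: abs_mult mult_right_mono c1)
      show "\<bar>\<Sum>z\<in>B. M x z * C2 z y\<bar> \<le> (\<Sum>z\<in>B. K * \<bar>M x z\<bar>)"
        by (intro order_trans[OF sum_abs] sum_mono) (simp add: abs_mult mult_right_mono c2 mult.commute[of "\<bar>M x _\<bar>"])
    qed auto
    also have "\<dots> = (\<Sum>z\<in>B. K * (\<bar>M x y\<bar> * \<bar>M z y\<bar>)) + (\<Sum>z\<in>B. K * (\<bar>M x y\<bar> * \<bar>M x z\<bar>))"
      by (simp add: sum_distrib_left algebra_simps)
    finally show "\<bar>M x y * (mm C1 M + mm M C2) x y\<bar> \<le> \<dots>" .
  qed
  also have "\<dots> = K * (\<Sum>x\<in>B. \<Sum>y\<in>B. \<Sum>z\<in>B. \<bar>M x y\<bar> * \<bar>M z y\<bar>) + K * (\<Sum>x\<in>B. \<Sum>y\<in>B. \<Sum>z\<in>B. \<bar>M x y\<bar> * \<bar>M x z\<bar>)"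
    by (simp add: sum.distrib sum_distrib_left)
  also have "\<dots> \<le> K * (real (card B) * fro M) + K * (real (card B) * fro M)"
    by (intro add_mono mult_left_mono amgm3a amgm3b K0)
  finally show ?thesis by (simp add: algebra_simps)
qed

lemma gron:
  fixes M C1 C2 :: "real \<Rightarrow> bmat" and a b K t0 :: real
  assumes ab: "a < b"
    and lim0: "\<And>x y. ((\<lambda>s. M s x y) \<longlongrightarrow> 0) (at_right a)"
    and der: "\<And>t. t \<in> {a<..<b} \<Longrightarrow> mderiv M (mm (C1 t) (M t) + mm (M t) (C2 t)) t"
    and b1: "\<And>t x y. t \<in> {a<..<b} \<Longrightarrow> \<bar>C1 t x y\<bar> \<le> K"
    and b2: "\<And>t x y. t \<in> {a<..<b} \<Longrightarrow> \<bar>C2 t x y\<bar> \<le> K"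
    and t0: "t0 \<in> {a<..<b}" and x0: "x0 \<in> B" and y0: "y0 \<in> B"
  shows "M t0 x0 y0 = 0"
proof -
  define Me where "Me s = (if s = a then 0 else M s)" for s
  have Mea: "Me a = 0" by (simp add: Me_def)
  have MeM: "s \<noteq> a \<Longrightarrow> Me s = M s" for s by (simp add: Me_def)
  have contMe: "continuous_on {a..t0} (\<lambda>s. Me s x y)" for x y
  proof (rule cont_right)
    show "a < t0" using t0 by simp
    have ev: "eventually (\<lambda>s. M s x y = Me s x y) (at_right a)"
      unfolding eventually_at_filter by (simp add: MeM)
    show "((\<lambda>s. Me s x y) \<longlongrightarrow> Me a x y) (at_right a)"
      unfolding Mea using Lim_transform_eventually[OF lim0 ev] by simp
  next
    fix t assume t: "t \<in> {a<..t0}"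
    then have "t \<in> {a<..<b}" using t0 by auto
    from mderiv_isCont[OF der[OF this]] have "isCont (\<lambda>s. M s x y) t" .
    moreover have "eventually (\<lambda>s. M s x y = Me s x y) (nhds t)"
      using eventually_nhds_in_open[of "{a<..}" t] t by (auto elim!: eventually_mono simp: MeM)
    ultimately show "isCont (\<lambda>s. Me s x y) t" using isCont_cong[of "\<lambda>s. M s x y" "\<lambda>s. Me s x y" t] by simp
  qed
  define S where "S s = fro (Me s)" for s
  define L where "L = 2 * (2 * K * real (card B))"
  define F where "F s = S s * exp (- L * (s - a))" for s
  have Sc: "continuous_on {a..t0} S" unfolding S_def fro_def by (intro continuous_intros contMe)
  have Fc: "continuous_on {a..t0} F" unfolding F_def by (intro continuous_intros Sc)
  define D where "D s = mm (C1 s) (M s) + mm (M s) (C2 s)" for s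
  have dS: "(S has_real_derivative 2 * (\<Sum>x\<in>B. \<Sum>y\<in>B. M s x y * D s x y)) (at s)"
    if s: "s \<in> {a<..<t0}" for s
  proof -
    have sb: "s \<in> {a<..<b}" using s t0 by auto
    have d: "\<And>x y. ((\<lambda>s. M s x y) has_real_derivative D s x y) (at s)"
      using der[OF sb] unfolding mderiv_def D_def by blast
    have d2: "((\<lambda>s. (M s x y)\<^sup>2) has_real_derivative 2 * (M s x y * D s x y)) (at s)" for x y
      unfolding power2_eq_square by (rule DERIV_cong[OF DERIV_mult[OF d d]]) (simp add: algebra_simps)
    have "((\<lambda>s. fro (M s)) has_real_derivative (\<Sum>x\<in>B. \<Sum>y\<in>B. 2 * (M s x y * D s x y))) (at s)"
      unfolding fro_def by (intro DERIV_sum d2)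
    then have "((\<lambda>s. fro (M s)) has_real_derivative 2 * (\<Sum>x\<in>B. \<Sum>y\<in>B. M s x y * D s x y)) (at s)"
      by (simp add: sum_distrib_left)
    then show ?thesis
      by (rule has_field_derivative_transform_within_open[where S="{a<..}"]) (use s in \<open>auto simp: S_def MeM\<close>)
  qed
  have dF: "(F has_real_derivative (2 * (\<Sum>x\<in>B. \<Sum>y\<in>B. M s x y * D s x y) - L * S s) * exp (- L * (s - a))) (at s)"
    if s: "s \<in> {a<..<t0}" for s
    unfolding F_def using s by (auto intro!: derivative_eq_intros dS simp: algebra_simps)
  have dFneg: "(2 * (\<Sum>x\<in>B. \<Sum>y\<in>B. M s x y * D s x y) - L * S s) * exp (- L * (s - a)) \<le> 0"
    if s: "s \<in> {a<..<t0}" for s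
  proof -
    have sb: "s \<in> {a<..<b}" using s t0 by auto
    have "\<bar>\<Sum>x\<in>B. \<Sum>y\<in>B. M s x y * D s x y\<bar> \<le> 2 * K * real (card B) * fro (M s)"
      unfolding D_def by (rule lin_bound) (use b1[OF sb] b2[OF sb] in auto)
    moreover have "S s = fro (M s)" using s by (simp add: S_def MeM)
    ultimately have "2 * (\<Sum>x\<in>B. \<Sum>y\<in>B. M s x y * D s x y) - L * S s \<le> 0"
      by (simp add: L_def abs_le_iff)
    then show ?thesis by (simp add: mult_nonpos_nonneg)
  qed
  obtain l z where z: "a < z" "z < t0" "(F has_real_derivative l) (at z)" "F t0 - F a = (t0 - a) * l"
  proof -
    have dif: "F differentiable (at x)" if "a < x" "x < t0" for x
      unfolding real_differentiable_def using dF[of x] that by auto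
    have "a < t0" using t0 by simp
    from MVT[OF this Fc dif] show ?thesis using that by blast
  qed
  have "l \<le> 0" using DERIV_unique[OF z(3) dF[of z]] dFneg[of z] z by auto
  moreover have "F a = 0" by (simp add: F_def S_def Mea fro_def)
  ultimately have "F t0 \<le> 0" using z t0 by (simp add: mult_nonneg_nonpos)
  then have "S t0 \<le> 0" by (simp add: F_def mult_le_0_iff)
  then have "fro (M t0) = 0" using t0 fro_nonneg[of "M t0"] by (simp add: S_def MeM)
  then have "\<forall>x\<in>B. \<forall>y\<in>B. (M t0 x y)\<^sup>2 = 0"
    unfolding fro_def using finB by (simp add: sum_nonneg_eq_0_iff sum_nonneg)
  then show ?thesis using x0 y0 by simp
qed

end


lemma ext_cont:
  fixes f :: "real \<Rightarrow> real"
  assumes ac: "a < c" and l: "(f \<longlongrightarrow> l) (at_right a)"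
    and i: "\<And>t. t \<in> {a<..c} \<Longrightarrow> isCont f t"
  shows "continuous_on {a..c} (\<lambda>s. if s = a then l else f s)"
proof (rule cont_right[OF ac])
  have ev: "eventually (\<lambda>s. f s = (if s = a then l else f s)) (at_right a)"
    unfolding eventually_at_filter by simp
  show "((\<lambda>s. if s = a then l else f s) \<longlongrightarrow> (if a = a then l else f a)) (at_right a)"
    using Lim_transform_eventually[OF l ev] by simp
next
  fix t assume t: "t \<in> {a<..c}"
  have "eventually (\<lambda>s. s \<in> {a<..}) (nhds t)" by (rule eventually_nhds_in_open) (use t in auto)
  then have "eventually (\<lambda>s. f s = (if s = a then l else f s)) (nhds t)"
    by (rule eventually_mono) auto
  then show "isCont (\<lambda>s. if s = a then l else f s) t"
    using isCont_cong[of f "\<lambda>s. if s = a then l else f s" t] i[OF t] by simp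
qed

lemma Gamma2_alt: "Gamma2 x y = (if snd x = 1 \<and> y = x then 1 else 0)"
  by (cases x; cases y) (auto simp: Gamma2_def)

context fb begin

definition mtends :: "(real \<Rightarrow> bmat) \<Rightarrow> bmat \<Rightarrow> real filter \<Rightarrow> bool" where
  "mtends P L F \<longleftrightarrow> (\<forall>x y. ((\<lambda>s. P s x y) \<longlongrightarrow> L x y) F)"

lemma mtends_const: "mtends (\<lambda>s. P) P F" by (simp add: mtends_def)
lemma mtends_add: "mtends P L1 F \<Longrightarrow> mtends R L2 F \<Longrightarrow> mtends (\<lambda>s. P s + R s) (L1 + L2) F"
  by (auto simp: mtends_def intro!: tendsto_intros)
lemma mtends_diff: "mtends P L1 F \<Longrightarrow> mtends R L2 F \<Longrightarrow> mtends (\<lambda>s. P s - R s) (L1 - L2) F"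
  by (auto simp: mtends_def intro!: tendsto_intros)
lemma mtends_uminus: "mtends P L1 F \<Longrightarrow> mtends (\<lambda>s. - P s) (- L1) F"
  by (auto simp: mtends_def intro!: tendsto_intros)
lemma mtends_tr: "mtends P L1 F \<Longrightarrow> mtends (\<lambda>s. mtrans (P s)) (mtrans L1) F"
  by (auto simp: mtends_def mtrans_def)
lemma mtends_mm: "mtends P L1 F \<Longrightarrow> mtends R L2 F \<Longrightarrow> mtends (\<lambda>s. mm (P s) (R s)) (mm L1 L2) F"
  unfolding mtends_def mm_def by (auto intro!: tendsto_intros)
lemma mtends_mono: "F \<le> F' \<Longrightarrow> mtends P L F' \<Longrightarrow> mtends P L F"
  unfolding mtends_def using tendsto_mono by blast
lemma mderiv_mtends: "mderiv P D t \<Longrightarrow> mtends P (P t) (at t)"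
  unfolding mtends_def using mderiv_isCont[of P D t] by (simp add: isCont_def)
lemma mtends_eqD: "mtends P L F \<Longrightarrow> L = L' \<Longrightarrow> mtends P L' F" by simp

lemmas mtends_intros = mtends_const mtends_add mtends_diff mtends_uminus mtends_tr mtends_mm
lemmas mderiv_intros = mderiv_const mderiv_add mderiv_diff mderiv_uminus mderiv_tr mderiv_mm

lemma bnd_lemma:
  assumes ac: "a < c" and l: "mtends P L (at_right a)"
    and i: "\<And>t. t \<in> {a<..c} \<Longrightarrow> mtends P (P t) (at t)"
    and r: "\<And>s. rsd (P s)"
  shows "\<exists>K. \<forall>t\<in>{a<..c}. \<forall>x y. \<bar>P t x y\<bar> \<le> K"
proof -
  define Pe where "Pe s = (if s = a then L else P s)" for s
  have ce: "continuous_on {a..c} (\<lambda>s. Pe s x y)" for x y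
  proof -
    have l1: "((\<lambda>s. P s x y) \<longlongrightarrow> L x y) (at_right a)" using l unfolding mtends_def by blast
    have i1: "isCont (\<lambda>s. P s x y) t" if "t \<in> {a<..c}" for t
      using i[OF that] unfolding mtends_def isCont_def by blast
    have "continuous_on {a..c} (\<lambda>s. if s = a then L x y else P s x y)"
      by (rule ext_cont[OF ac l1 i1])
    moreover have "(\<lambda>s. Pe s x y) = (\<lambda>s. if s = a then L x y else P s x y)"
      by (simp add: Pe_def fun_eq_iff)
    ultimately show ?thesis by (simp only:)
  qed
  have "continuous_on {a..c} (\<lambda>s. nm (Pe s))" unfolding nm_def by (intro continuous_intros ce)
  then obtain s0 where s0: "\<forall>s\<in>{a..c}. nm (Pe s) \<le> nm (Pe s0)"
    using continuous_attains_sup[of "{a..c}" "\<lambda>s. nm (Pe s)"] ac by auto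
  show ?thesis
  proof (intro exI ballI allI)
    fix t x y assume t: "t \<in> {a<..c}"
    show "\<bar>P t x y\<bar> \<le> nm (Pe s0)"
    proof (cases "x \<in> B \<and> y \<in> B")
      case True
      then have "\<bar>P t x y\<bar> \<le> nm (P t)" by (simp add: nm_entry)
      also have "\<dots> = nm (Pe t)" using t by (simp add: Pe_def)
      also have "\<dots> \<le> nm (Pe s0)" using s0 t by auto
      finally show ?thesis .
    next
      case False
      then have "P t x y = 0" using r[of t] unfolding rsd_def by blast
      then show ?thesis by (simp add: nm_nonneg)
    qed
  qed
qed

lemma qf_G2: "0 \<le> qf v (rs Gamma2)"
proof -
  have "qf v (rs Gamma2) = (\<Sum>x\<in>B. \<Sum>y\<in>B. if y = x then (if snd x = 1 then (v x)\<^sup>2 else 0) else 0)"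
    unfolding qf_def by (intro sum.cong refl) (auto simp: rs_def Gamma2_alt power2_eq_square)
  also have "\<dots> = (\<Sum>x\<in>B. if snd x = 1 then (v x)\<^sup>2 else 0)" using finB by simp
  also have "\<dots> \<ge> 0" by (intro sum_nonneg) auto
  finally show ?thesis .
qed

lemma symB_tr: "mtrans M = M \<Longrightarrow> symB M"
  unfolding symB_def by (metis mtrans_def)

lemma bf_mm_r: "bf a (mm P R) b = bf a P (\<lambda>y. \<Sum>z\<in>B. R y z * b z)"
proof -
  have "bf a (mm P R) b = (\<Sum>x\<in>B. \<Sum>z\<in>B. a x * (\<Sum>y\<in>B. P x y * R y z) * b z)"
    unfolding bf_def by (intro sum.cong refl) (simp add: mm_def)
  also have "\<dots> = (\<Sum>x\<in>B. \<Sum>z\<in>B. \<Sum>y\<in>B. a x * P x y * R y z * b z)"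
    by (simp add: sum_distrib_left sum_distrib_right mult.assoc)
  also have "\<dots> = (\<Sum>x\<in>B. \<Sum>y\<in>B. \<Sum>z\<in>B. a x * P x y * R y z * b z)"
    by (rule sum.cong[OF refl], rule sum.swap)
  also have "\<dots> = bf a P (\<lambda>y. \<Sum>z\<in>B. R y z * b z)"
    unfolding bf_def by (simp add: sum_distrib_left mult.assoc)
  finally show ?thesis .
qed

lemma bf_mm_l: "bf a (mm P R) b = bf (\<lambda>y. \<Sum>x\<in>B. a x * P x y) R b"
proof -
  have "bf a (mm P R) b = (\<Sum>x\<in>B. \<Sum>z\<in>B. a x * (\<Sum>y\<in>B. P x y * R y z) * b z)"
    unfolding bf_def by (intro sum.cong refl) (simp add: mm_def)
  also have "\<dots> = (\<Sum>x\<in>B. \<Sum>z\<in>B. \<Sum>y\<in>B. a x * P x y * R y z * b z)"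
    by (simp add: sum_distrib_left sum_distrib_right mult.assoc)
  also have "\<dots> = (\<Sum>z\<in>B. \<Sum>x\<in>B. \<Sum>y\<in>B. a x * P x y * R y z * b z)"
    by (rule sum.swap)
  also have "\<dots> = (\<Sum>z\<in>B. \<Sum>y\<in>B. \<Sum>x\<in>B. a x * P x y * R y z * b z)"
    by (rule sum.cong[OF refl], rule sum.swap)
  also have "\<dots> = (\<Sum>y\<in>B. \<Sum>z\<in>B. \<Sum>x\<in>B. a x * P x y * R y z * b z)"
    by (rule sum.swap)
  also have "\<dots> = bf (\<lambda>y. \<Sum>x\<in>B. a x * P x y) R b"
    unfolding bf_def by (simp add: sum_distrib_left sum_distrib_right mult.assoc)
  finally show ?thesis .
qed

lemma qf_congr: "qf v (mm (mm (mtrans P) M) P) = qf (\<lambda>y. \<Sum>x\<in>B. P y x * v x) M"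
  unfolding qf_bf by (subst bf_mm_r, subst bf_mm_l) (simp add: mtrans_def mult.commute)

end

context fb begin

lemma inv_deriv:
  fixes U V :: "real \<Rightarrow> bmat"
  assumes S: "open S" "t \<in> S"
    and inv1: "\<And>s. s \<in> S \<Longrightarrow> mm (U s) (V s) = Idm"
    and inv2: "\<And>s. s \<in> S \<Longrightarrow> mm (V s) (U s) = Idm"
    and rU: "\<And>s. rsd (U s)"
    and dV: "mderiv V W t"
  shows "mderiv U (- mm (mm (U t) W) (U t)) t"
proof -
  have idt: "U s - U t = mm (mm (U s) (V t - V s)) (U t)" if s: "s \<in> S" for s
  proof -
    have "mm (mm (U s) (V t - V s)) (U t) = mm (U s) (mm (V t) (U t)) - mm (mm (U s) (V s)) (U t)"
      by (simp add: mm_diff_l mm_diff_r mm_assoc)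
    also have "\<dots> = U s - U t" using inv1[OF s] inv2[OF S(2)] by (simp add: Idm_l Idm_r rU)
    finally show ?thesis by simp
  qed
  have vc: "((\<lambda>s. V s x y) \<longlongrightarrow> V t x y) (at t)" for x y
    using mderiv_isCont[OF dV] isCont_def by blast
  have vt: "((\<lambda>s. nm (V t - V s)) \<longlongrightarrow> 0) (at t)"
  proof -
    have "((\<lambda>s. \<Sum>x\<in>B. \<Sum>y\<in>B. \<bar>V t x y - V s x y\<bar>) \<longlongrightarrow> (\<Sum>x\<in>B. \<Sum>y\<in>B. \<bar>V t x y - V t x y\<bar>)) (at t)"
      by (intro tendsto_intros vc)
    then show ?thesis by (simp add: nm_def)
  qed
  define c where "c = nm (U t)"
  have c0: "0 \<le> c" by (simp add: c_def nm_nonneg)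
  have ev1: "eventually (\<lambda>s. nm (V t - V s) * c < 1/2) (at t)"
  proof -
    have "((\<lambda>s. nm (V t - V s) * c) \<longlongrightarrow> 0 * c) (at t)" by (intro tendsto_intros vt)
    then show ?thesis by (rule order_tendstoD) simp
  qed
  have evS: "eventually (\<lambda>s. s \<in> S) (at t)" by (rule eventually_at_in_open'[OF S])
  have bnd: "eventually (\<lambda>s. nm (U s - U t) \<le> 2 * c * c * nm (V t - V s)) (at t)"
    using ev1 evS
  proof eventually_elim
    case (elim s)
    have D0: "0 \<le> nm (V t - V s)" by (rule nm_nonneg)
    have "nm (U s - U t) \<le> nm (mm (U s) (V t - V s)) * c"
      unfolding idt[OF elim(2)] c_def by (rule nm_mm)
    also have "\<dots> \<le> nm (U s) * nm (V t - V s) * c"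
      using c0 nm_mm[of "U s" "V t - V s"] by (rule mult_right_mono[rotated])
    finally have d: "nm (U s - U t) \<le> nm (U s) * nm (V t - V s) * c" .
    have "nm (U s) = nm (U t + (U s - U t))" by simp
    also have "\<dots> \<le> c + nm (U s - U t)" unfolding c_def by (rule nm_add)
    finally have "nm (U s) \<le> c + nm (U s) * (nm (V t - V s) * c)" using d by (simp add: mult.assoc)
    moreover have "nm (U s) * (nm (V t - V s) * c) \<le> nm (U s) * (1/2)"
      using elim(1) nm_nonneg[of "U s"] by (intro mult_left_mono) auto
    ultimately have "nm (U s) \<le> 2 * c" by simp
    then have "nm (U s) * nm (V t - V s) * c \<le> (2 * c) * nm (V t - V s) * c"
      using D0 c0 by (intro mult_right_mono) auto
    then show ?case using d by (simp add: mult.commute mult.left_commute)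
  qed
  have g0: "((\<lambda>s. 2 * c * c * nm (V t - V s)) \<longlongrightarrow> 0) (at t)"
    using tendsto_mult_right_zero[OF vt, of "2 * c * c"] by simp
  have uc: "((\<lambda>s. U s x y) \<longlongrightarrow> U t x y) (at t)" for x y
  proof (cases "x \<in> B \<and> y \<in> B")
    case True
    have "eventually (\<lambda>s. norm (U s x y - U t x y) \<le> 2 * c * c * nm (V t - V s)) (at t)"
      using bnd
    proof eventually_elim
      case (elim s)
      have "\<bar>(U s - U t) x y\<bar> \<le> nm (U s - U t)" using True by (intro nm_entry) auto
      then show ?case using elim by simp
    qed
    from Lim_null_comparison[OF this g0] show ?thesis by (simp add: LIM_zero_iff)
  next
    case False
    then have "\<And>s. U s x y = 0" using rU unfolding rsd_def by blast
    then show ?thesis by simp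
  qed
  show ?thesis unfolding mderiv_def
  proof (intro allI)
    fix x y
    show "((\<lambda>s. U s x y) has_real_derivative (- mm (mm (U t) W) (U t)) x y) (at t)"
    proof (cases "x \<in> B \<and> y \<in> B")
      case False
      then have "\<And>s. U s x y = 0" using rU unfolding rsd_def by blast
      moreover have "(- mm (mm (U t) W) (U t)) x y = 0" using False by (auto simp: mm_def)
      ultimately show ?thesis by simp
    next
      case True
      have vq: "((\<lambda>s. (V t p q - V s p q) / (s - t)) \<longlongrightarrow> - W p q) (at t)" for p q
      proof -
        have "((\<lambda>s. (V s p q - V t p q) / (s - t)) \<longlongrightarrow> W p q) (at t)"
          using dV unfolding mderiv_def has_field_derivative_iff by blast
        from tendsto_minus[OF this] show ?thesis by (simp add: minus_divide_left)
      qed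
      define G where "G s = (\<Sum>q\<in>B. (\<Sum>p\<in>B. U s x p * ((V t p q - V s p q) / (s - t))) * U t q y)" for s
      have Gl: "(G \<longlongrightarrow> (\<Sum>q\<in>B. (\<Sum>p\<in>B. U t x p * (- W p q)) * U t q y)) (at t)"
        unfolding G_def by (intro tendsto_intros uc vq)
      have ev: "eventually (\<lambda>s. G s = (U s x y - U t x y) / (s - t)) (at t)"
        using eventually_at_in_open[OF S]
      proof eventually_elim
        case (elim s)
        then have s: "s \<in> S" "s \<noteq> t" by auto
        have "U s x y - U t x y = mm (mm (U s) (V t - V s)) (U t) x y"
          using fun_cong[OF fun_cong[OF idt[OF s(1)]], of x y] by simp
        also have "\<dots> = (\<Sum>q\<in>B. (\<Sum>p\<in>B. U s x p * (V t p q - V s p q)) * U t q y)"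
          using True by (simp add: mm_def)
        finally show ?case using s
          by (simp add: G_def sum_divide_distrib sum_distrib_right times_divide_eq_right
              times_divide_eq_left)
      qed
      have "((\<lambda>s. (U s x y - U t x y) / (s - t)) \<longlongrightarrow> (\<Sum>q\<in>B. (\<Sum>p\<in>B. U t x p * (- W p q)) * U t q y)) (at t)"
        using Lim_transform_eventually[OF Gl ev] .
      moreover have "(\<Sum>q\<in>B. (\<Sum>p\<in>B. U t x p * (- W p q)) * U t q y) = (- mm (mm (U t) W) (U t)) x y"
        using True by (simp add: mm_def sum_negf)
      ultimately show ?thesis unfolding has_field_derivative_iff by simp
    qed
  qed
qed

end


lemma finite_boxes: "finite (boxes ns)"
proof -
  have "boxes ns \<subseteq> {..length ns} \<times> {..sum_list ns}"
  proof
    fix p assume "p \<in> boxes ns"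
    then obtain a i where p: "p = (a, i)" "1 \<le> a" "a \<le> length ns" "i \<le> ns ! (a - 1)"
      unfolding boxes_def by auto
    then have "ns ! (a - 1) \<le> sum_list ns" by (intro elem_le_sum_list) auto
    then show "p \<in> {..length ns} \<times> {..sum_list ns}" using p by auto
  qed
  then show ?thesis by (rule finite_subset) auto
qed

lemma Gamma2_sym: "Gamma2 x y = Gamma2 y x"
  by (auto simp: Gamma2_alt)

context fb begin

lemma mmul_mm: "x \<in> B \<Longrightarrow> y \<in> B \<Longrightarrow> mmul B P R x y = mm P R x y"
  by (simp add: mmul_def mm_def)
lemma mmul_mm2: "x \<in> B \<Longrightarrow> y \<in> B \<Longrightarrow> mmul B (mmul B P R) S x y = mm (mm P R) S x y"
  by (auto simp: mmul_def mm_def intro!: sum.cong)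
lemma mm_mmul_l: "mm (mmul B P R) S = mm (mm P R) S"
  by (auto intro!: ext sum.cong simp: mm_def mmul_def)
lemma rs_in: "x \<in> B \<Longrightarrow> y \<in> B \<Longrightarrow> rs M x y = M x y" by (simp add: rs_def)
lemma rsd_out: "rsd M \<Longrightarrow> \<not> (x \<in> B \<and> y \<in> B) \<Longrightarrow> M x y = 0" unfolding rsd_def by blast
lemma rsd_eqI: "rsd M \<Longrightarrow> rsd N \<Longrightarrow> (\<And>x y. x \<in> B \<Longrightarrow> y \<in> B \<Longrightarrow> M x y = N x y) \<Longrightarrow> M = N"
  by (intro ext) (metis rsd_out)
lemma qf_uminus: "qf v (- M) = - qf v M" by (simp add: qf_def sum_negf)
lemma mm_Idm_assoc_l: "mm P R = Idm \<Longrightarrow> rsd X \<Longrightarrow> mm P (mm R X) = X"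
  by (simp add: mm_assoc[symmetric] Idm_l)

end

theorem lemma4p14:
  fixes ns :: "nat list" and Q :: bmat and V V' :: "real \<Rightarrow> bmat" and T :: real
  assumes young: "young_diagram ns"
    and Qsym: "symmetric_on (boxes ns) Q"
    and Tpos: "0 < T"
    and deriv: "\<And>t x y. t \<in> {0<..<T} \<Longrightarrow> x \<in> boxes ns \<Longrightarrow> y \<in> boxes ns \<Longrightarrow>
                 ((\<lambda>s. V s x y) has_real_derivative V' t x y) (at t)"
    and ode: "\<And>t x y. t \<in> {0<..<T} \<Longrightarrow> x \<in> boxes ns \<Longrightarrow> y \<in> boxes ns \<Longrightarrow>
                 V' t x y = - mmul (boxes ns) Gamma1 (V t) x y
                            - mmul (boxes ns) (V t) (mtrans Gamma1) x y
                            - Q x y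
                            - mmul (boxes ns) (mmul (boxes ns) (V t) Gamma2) (V t) x y"
    and inv: "\<forall>\<^sub>F t in at_right 0. invertible_on (boxes ns) (V t)"
    and lim: "\<And>x y. x \<in> boxes ns \<Longrightarrow> y \<in> boxes ns \<Longrightarrow>
                 ((\<lambda>t. minv (boxes ns) (V t) x y) \<longlongrightarrow> 0) (at_right 0)"
  shows "\<forall>t\<in>{0<..<T}. neg_semidef_on (boxes ns) (V' t)"
proof -
  interpret fb "boxes ns" by unfold_locales (rule finite_boxes)
  define Vr where "Vr t = rs (V t)" for t
  define Wr where "Wr t = rs (V' t)" for t
  define G1 where "G1 = rs Gamma1"
  define G2 where "G2 = rs Gamma2"
  define Qr where "Qr = rs Q"
  define F where "F t = - mm G1 (Vr t) - mm (Vr t) (mtrans G1) - Qr - mm (mm (Vr t) G2) (Vr t)" for t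
  have rV: "rsd (Vr t)" and rW: "rsd (Wr t)" and rG1: "rsd G1" and rG2: "rsd G2" and rQ: "rsd Qr" for t
    by (simp_all add: Vr_def Wr_def G1_def G2_def Qr_def rsd_rs)
  have trQ: "mtrans Qr = Qr"
    using Qsym unfolding Qr_def symmetric_on_def by (auto intro!: ext simp: mtrans_def rs_def)
  have trG2: "mtrans G2 = G2"
    unfolding G2_def by (auto intro!: ext simp: mtrans_def rs_def Gamma2_sym)
  have odeF: "Wr t = F t" if t: "t \<in> {0<..<T}" for t
  proof (rule rsd_eqI)
    show "rsd (Wr t)" by (rule rW)
    show "rsd (F t)" unfolding F_def by (intro rsd_intros rQ)
    fix x y assume xy: "x \<in> boxes ns" "y \<in> boxes ns"
    show "Wr t x y = F t x y"
      using ode[OF t xy] xy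
      by (simp add: mm_mmul_l Wr_def F_def Vr_def G1_def G2_def Qr_def rs_in mmul_mm mmul_mm2 mm_rs_l mm_rs_r tr_rs)
  qed
  have dV: "mderiv Vr (Wr t) t" if t: "t \<in> {0<..<T}" for t
    unfolding mderiv_def
  proof (intro allI)
    fix x y
    show "((\<lambda>s. Vr s x y) has_real_derivative Wr t x y) (at t)"
    proof (cases "x \<in> boxes ns \<and> y \<in> boxes ns")
      case True then show ?thesis using deriv[OF t] by (simp add: Vr_def Wr_def rs_in)
    next
      case False
      then have "(\<lambda>s. Vr s x y) = (\<lambda>s. 0)" "Wr t x y = 0" by (auto simp: Vr_def Wr_def rs_def)
      then show ?thesis by simp
    qed
  qed
  obtain \<delta>0 where \<delta>0: "\<delta>0 > 0" "\<And>t. 0 < t \<Longrightarrow> t < \<delta>0 \<Longrightarrow> invertible_on (boxes ns) (V t)"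
    using inv unfolding eventually_at_right_field by auto
  define \<delta> where "\<delta> = min \<delta>0 T"
  have \<delta>p: "\<delta> > 0" "\<delta> \<le> T" using \<delta>0(1) Tpos by (auto simp: \<delta>_def)
  define Ur where "Ur t = rs (minv (boxes ns) (V t))" for t
  have rU: "rsd (Ur t)" for t by (simp add: Ur_def rsd_rs)
  have invs: "mm (Ur t) (Vr t) = Idm \<and> mm (Vr t) (Ur t) = Idm" if t: "t \<in> {0<..<\<delta>}" for t
  proof -
    have "invertible_on (boxes ns) (V t)" using t \<delta>0(2) by (auto simp: \<delta>_def)
    then have iv: "is_inverse (boxes ns) (V t) (minv (boxes ns) (V t))"
      unfolding invertible_on_def minv_def by (rule someI_ex)
    show ?thesis
    proof
      show "mm (Ur t) (Vr t) = Idm"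
        by (rule rsd_eqI[OF rsd_mm rsd_Idm]) (use iv in \<open>auto simp: Ur_def Vr_def mm_rs_l mm_rs_r
              mmul_mm[symmetric] is_inverse_def Idm_def\<close>)
      show "mm (Vr t) (Ur t) = Idm"
        by (rule rsd_eqI[OF rsd_mm rsd_Idm]) (use iv in \<open>auto simp: Ur_def Vr_def mm_rs_l mm_rs_r
              mmul_mm[symmetric] is_inverse_def Idm_def\<close>)
    qed
  qed
  have dU: "mderiv Ur (- mm (mm (Ur t) (Wr t)) (Ur t)) t" if t: "t \<in> {0<..<\<delta>}" for t
    by (rule inv_deriv[of "{0<..<\<delta>}"]) (use t invs rU dV \<delta>p in auto)
  define Z where "Z t = G2 + mm (Ur t) G1 + mm (mtrans G1) (Ur t) + mm (mm (Ur t) Qr) (Ur t)" for t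
  have Zeq: "- mm (mm (Ur t) (Wr t)) (Ur t) = Z t" if t: "t \<in> {0<..<\<delta>}" for t
  proof -
    have tT: "t \<in> {0<..<T}" using t \<delta>p by auto
    have i1: "mm (Ur t) (Vr t) = Idm" and i2: "mm (Vr t) (Ur t) = Idm" using invs[OF t] by auto
    have a1: "rsd X \<Longrightarrow> mm (Ur t) (mm (Vr t) X) = X" for X by (rule mm_Idm_assoc_l[OF i1])
    show ?thesis
      by (simp add: odeF[OF tT] F_def Z_def mm_simps i2 a1 Idm_l Idm_r rsd_intros rG1 rG2 rQ rU rV
          algebra_simps)
  qed

  have Ulim: "mtends Ur 0 (at_right 0)"
    unfolding mtends_def
  proof (intro allI)
    fix x y
    show "((\<lambda>s. Ur s x y) \<longlongrightarrow> 0 x y) (at_right 0)"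
    proof (cases "x \<in> boxes ns \<and> y \<in> boxes ns")
      case True then show ?thesis using lim[of x y] by (simp add: Ur_def rs_in)
    next
      case False
      then have "(\<lambda>s. Ur s x y) = (\<lambda>s. 0)" by (auto simp: Ur_def rs_def)
      then show ?thesis by simp
    qed
  qed
  have Ucont: "mtends Ur (Ur t) (at t)" if "t \<in> {0<..<\<delta>}" for t
    by (rule mderiv_mtends[OF dU[OF that]])
  define d where "d = 3 * \<delta> / 4"
  have dp: "0 < d" "d < \<delta>" using \<delta>p by (auto simp: d_def)
  have dU': "mderiv Ur (Z t) t" if t: "t \<in> {0<..<\<delta>}" for t
    using dU[OF t] Zeq[OF t] by simp
  have Usym: "mtrans (Ur t) = Ur t" if t: "t \<in> {0<..<d}" for t
  proof -
    define E where "E s = Ur s - mtrans (Ur s)" for s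
    define C1 where "C1 s = mtrans G1 + mm (mtrans (Ur s)) Qr" for s
    define C2 where "C2 s = G1 + mm Qr (Ur s)" for s
    have b1: "\<exists>K. \<forall>t\<in>{0<..d}. \<forall>x y. \<bar>C1 t x y\<bar> \<le> K"
    proof (rule bnd_lemma[OF dp(1)])
      show "mtends C1 (mtrans G1 + mm (mtrans 0) Qr) (at_right 0)"
        unfolding C1_def by (intro mtends_intros Ulim)
      show "mtends C1 (C1 t) (at t)" if "t \<in> {0<..d}" for t
        unfolding C1_def using that dp by (intro mtends_intros Ucont) auto
      show "rsd (C1 s)" for s unfolding C1_def by (intro rsd_intros rG1 rQ)
    qed
    have b2: "\<exists>K. \<forall>t\<in>{0<..d}. \<forall>x y. \<bar>C2 t x y\<bar> \<le> K"
    proof (rule bnd_lemma[OF dp(1)])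
      show "mtends C2 (G1 + mm Qr 0) (at_right 0)"
        unfolding C2_def by (intro mtends_intros Ulim)
      show "mtends C2 (C2 t) (at t)" if "t \<in> {0<..d}" for t
        unfolding C2_def using that dp by (intro mtends_intros Ucont) auto
      show "rsd (C2 s)" for s unfolding C2_def by (intro rsd_intros rG1 rQ)
    qed
    obtain K1 K2 where K1: "\<And>t x y. t \<in> {0<..d} \<Longrightarrow> \<bar>C1 t x y\<bar> \<le> K1"
      and K2: "\<And>t x y. t \<in> {0<..d} \<Longrightarrow> \<bar>C2 t x y\<bar> \<le> K2" using b1 b2 by blast
    have E0: "E t x y = 0" if "x \<in> boxes ns" "y \<in> boxes ns" for x y
    proof (rule gron[OF dp(1), of E C1 C2 "max K1 K2"])
      show "((\<lambda>s. E s x y) \<longlongrightarrow> 0) (at_right 0)" for x y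
      proof -
        have "mtends E (0 - mtrans 0) (at_right 0)"
          unfolding E_def by (rule mtends_diff[OF Ulim mtends_tr[OF Ulim]])
        then have "mtends E 0 (at_right 0)" by (simp add: tr_zero)
        then have "((\<lambda>s. E s x y) \<longlongrightarrow> (0::bmat) x y) (at_right 0)" unfolding mtends_def by blast
        then show ?thesis by simp
      qed
      show "mderiv E (mm (C1 s) (E s) + mm (E s) (C2 s)) s" if s: "s \<in> {0<..<d}" for s
      proof -
        have sd: "s \<in> {0<..<\<delta>}" using s dp by auto
        have "mderiv E (Z s - mtrans (Z s)) s"
          unfolding E_def by (intro mderiv_intros dU'[OF sd])
        moreover have "Z s - mtrans (Z s) = mm (C1 s) (E s) + mm (E s) (C2 s)"
          by (simp add: Z_def C1_def C2_def E_def mm_simps tr_simps trQ trG2 algebra_simps)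
        ultimately show ?thesis by simp
      qed
      show "\<bar>C1 s x y\<bar> \<le> max K1 K2" "\<bar>C2 s x y\<bar> \<le> max K1 K2" if "s \<in> {0<..<d}" for s x y
        using K1[of s x y] K2[of s x y] that by auto
    qed (use t that in auto)
    show ?thesis
      by (rule rsd_eqI) (use E0 in \<open>auto simp: E_def rU rsd_intros\<close>)
  qed

  have Zpsd: "0 \<le> qf v (Z t)" if t: "t \<in> {0<..<d}" for t v
  proof -
    define C where "C s = mtrans G1 + mm (Ur s) Qr" for s
    have b1: "\<exists>K. \<forall>t\<in>{0<..d}. \<forall>x y. \<bar>C t x y\<bar> \<le> K"
    proof (rule bnd_lemma[OF dp(1)])
      show "mtends C (mtrans G1 + mm 0 Qr) (at_right 0)"
        unfolding C_def by (intro mtends_intros Ulim)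
      show "mtends C (C t) (at t)" if "t \<in> {0<..d}" for t
        unfolding C_def using that dp by (intro mtends_intros Ucont) auto
      show "rsd (C s)" for s unfolding C_def by (intro rsd_intros rG1 rQ)
    qed
    then obtain K where K: "\<And>t x y. t \<in> {0<..d} \<Longrightarrow> \<bar>C t x y\<bar> \<le> K" by blast
    show ?thesis
    proof (rule prop_psd[OF dp(1), of Z G2 C K])
      have "mtends Z (G2 + mm 0 G1 + mm (mtrans G1) 0 + mm (mm 0 Qr) 0) (at_right 0)"
        unfolding Z_def by (intro mtends_intros Ulim)
      then have "mtends Z G2 (at_right 0)" by (simp add: mm_zero_l mm_zero_r)
      then show "((\<lambda>s. Z s x y) \<longlongrightarrow> G2 x y) (at_right 0)" for x y unfolding mtends_def by blast
      show "mderiv Z (mm (C s) (Z s) + mm (Z s) (mtrans (C s))) s" if s: "s \<in> {0<..<d}" for s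
      proof -
        have sd: "s \<in> {0<..<\<delta>}" using s dp by auto
        have us: "mtrans (Ur s) = Ur s" by (rule Usym[OF s])
        have "mderiv (\<lambda>s. G2 + mm (Ur s) G1 + mm (mtrans G1) (Ur s) + mm (mm (Ur s) Qr) (Ur s))
           (0 + (mm (Z s) G1 + mm (Ur s) 0) + (mm 0 (Ur s) + mm (mtrans G1) (Z s)) +
            (mm (mm (Z s) Qr + mm (Ur s) 0) (Ur s) + mm (mm (Ur s) Qr) (Z s))) s"
          by (intro mderiv_intros dU'[OF sd])
        moreover have "(\<lambda>s. G2 + mm (Ur s) G1 + mm (mtrans G1) (Ur s) + mm (mm (Ur s) Qr) (Ur s)) = Z"
          by (simp add: Z_def fun_eq_iff)
        moreover have "0 + (mm (Z s) G1 + mm (Ur s) 0) + (mm 0 (Ur s) + mm (mtrans G1) (Z s)) +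
            (mm (mm (Z s) Qr + mm (Ur s) 0) (Ur s) + mm (mm (Ur s) Qr) (Z s))
           = mm (C s) (Z s) + mm (Z s) (mtrans (C s))"
          by (simp add: C_def mm_simps tr_simps trQ us algebra_simps)
        ultimately show ?thesis by simp
      qed
      show "\<bar>C s x y\<bar> \<le> K" if "s \<in> {0<..<d}" for s x y using K that by auto
      show "symB (Z s)" if s: "s \<in> {0<..<d}" for s
      proof (rule symB_tr)
        have us: "mtrans (Ur s) = Ur s" by (rule Usym[OF s])
        show "mtrans (Z s) = Z s"
          by (simp add: Z_def mm_simps tr_simps trQ trG2 us algebra_simps)
      qed
      show "0 \<le> qf v G2" for v unfolding G2_def by (rule qf_G2)
    qed (use t in auto)
  qed
  have Vsym: "mtrans (Vr t) = Vr t" if t: "t \<in> {0<..<d}" for t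
  proof -
    have td: "t \<in> {0<..<\<delta>}" using t dp by auto
    have i1: "mm (Ur t) (Vr t) = Idm" and i2: "mm (Vr t) (Ur t) = Idm" using invs[OF td] by auto
    have "mm (mtrans (Vr t)) (Ur t) = mtrans (mm (mtrans (Ur t)) (Vr t))" by (simp add: tr_simps)
    also have "\<dots> = Idm" using Usym[OF t] i1 by (simp add: tr_Idm)
    finally have i3: "mm (mtrans (Vr t)) (Ur t) = Idm" .
    have "mtrans (Vr t) = mm (mtrans (Vr t)) (mm (Ur t) (Vr t))" using i1 by (simp add: Idm_r rsd_tr rV)
    also have "\<dots> = Vr t" using i3 by (simp add: mm_assoc[symmetric] Idm_l rV)
    finally show ?thesis .
  qed
  have Wneg: "qf v (Wr t) \<le> 0" if t: "t \<in> {0<..<d}" for t v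
  proof -
    have td: "t \<in> {0<..<\<delta>}" using t dp by auto
    have i1: "mm (Ur t) (Vr t) = Idm" and i2: "mm (Vr t) (Ur t) = Idm" using invs[OF td] by auto
    have a2: "rsd X \<Longrightarrow> mm (Vr t) (mm (Ur t) X) = X" for X by (rule mm_Idm_assoc_l[OF i2])
    have "mm (mm (Vr t) (Z t)) (Vr t) = - Wr t"
      unfolding Zeq[OF td, symmetric]
      by (simp add: mm_simps a2 i1 Idm_l Idm_r rsd_intros rW rU rV)
    then have "Wr t = - mm (mm (mtrans (Vr t)) (Z t)) (Vr t)" using Vsym[OF t] by simp
    then have "qf v (Wr t) = - qf (\<lambda>y. \<Sum>x\<in>boxes ns. Vr t y x * v x) (Z t)"
      by (simp add: qf_uminus qf_congr)
    then show ?thesis using Zpsd[OF t] by simp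
  qed

  define DF where "DF r = - (mm G1 (Wr r)) - (mm (Wr r) (mtrans G1)) - (mm (mm (Wr r) G2) (Vr r) + mm (mm (Vr r) G2) (Wr r))" for r
  have dW: "mderiv Wr (DF r) r" if r: "r \<in> {0<..<T}" for r
  proof -
    have "mderiv F (- (mm 0 (Vr r) + mm G1 (Wr r)) - (mm (Wr r) (mtrans G1) + mm (Vr r) 0) - 0 -
          (mm (mm (Wr r) G2 + mm (Vr r) 0) (Vr r) + mm (mm (Vr r) G2) (Wr r))) r"
      unfolding F_def by (intro mderiv_intros dV[OF r])
    then have "mderiv F (DF r) r" by (simp add: DF_def mm_zero_l mm_zero_r)
    then show ?thesis
      by (rule mderiv_transform[where S="{0<..<T}"]) (use r odeF in auto)
  qed
  have Wcont: "mtends Wr (Wr r) (at r)" if "r \<in> {0<..<T}" for r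
    by (rule mderiv_mtends[OF dW[OF that]])
  have Vcont: "mtends Vr (Vr r) (at r)" if "r \<in> {0<..<T}" for r
    by (rule mderiv_mtends[OF dV[OF that]])
  have right: "mtends P L (at_right r)" if "mtends P L (at r)" for P L r
    by (rule mtends_mono[OF at_le that]) simp
  show ?thesis
  proof (intro ballI)
    fix t assume t: "t \<in> {0<..<T}"
    define s where "s = min d t / 2"
    define b where "b = (t + T) / 2"
    have sp: "0 < s" "s < d" "s < t" "t < b" "b < T" using t dp by (auto simp: s_def b_def)
    have sbT: "r \<in> {0<..<T}" if "r \<in> {s..b}" for r using that sp by auto
    have sd: "s \<in> {0<..<d}" using sp by auto
    have Vsym2: "mtrans (Vr r) = Vr r" if r: "r \<in> {s<..<b}" for r
    proof -
      define E where "E r = Vr r - mtrans (Vr r)" for r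
      define C1 where "C1 r = - (G1 + mm (mtrans (Vr r)) G2)" for r
      define C2 where "C2 r = - (mtrans G1 + mm G2 (Vr r))" for r
      have sb: "s < b" using sp by simp
      have b1: "\<exists>K. \<forall>t\<in>{s<..b}. \<forall>x y. \<bar>C1 t x y\<bar> \<le> K"
      proof (rule bnd_lemma[OF sb])
        show "mtends C1 (C1 s) (at_right s)"
          unfolding C1_def using sbT[of s] sp by (intro right mtends_intros Vcont) auto
        show "mtends C1 (C1 t) (at t)" if "t \<in> {s<..b}" for t
          unfolding C1_def using that sbT by (intro mtends_intros Vcont) auto
        show "rsd (C1 s)" for s unfolding C1_def by (intro rsd_intros rG1 rG2 rV)
      qed
      have b2: "\<exists>K. \<forall>t\<in>{s<..b}. \<forall>x y. \<bar>C2 t x y\<bar> \<le> K"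
      proof (rule bnd_lemma[OF sb])
        show "mtends C2 (C2 s) (at_right s)"
          unfolding C2_def using sbT[of s] sp by (intro right mtends_intros Vcont) auto
        show "mtends C2 (C2 t) (at t)" if "t \<in> {s<..b}" for t
          unfolding C2_def using that sbT by (intro mtends_intros Vcont) auto
        show "rsd (C2 s)" for s unfolding C2_def by (intro rsd_intros rG1 rG2 rV)
      qed
      obtain K1 K2 where K1: "\<And>t x y. t \<in> {s<..b} \<Longrightarrow> \<bar>C1 t x y\<bar> \<le> K1"
        and K2: "\<And>t x y. t \<in> {s<..b} \<Longrightarrow> \<bar>C2 t x y\<bar> \<le> K2" using b1 b2 by blast
      have E0: "E r x y = 0" if "x \<in> boxes ns" "y \<in> boxes ns" for x y
      proof (rule gron[OF sb, of E C1 C2 "max K1 K2"])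
        show "((\<lambda>q. E q x y) \<longlongrightarrow> 0) (at_right s)" for x y
        proof -
          have "mtends E (Vr s - mtrans (Vr s)) (at_right s)"
            unfolding E_def using sbT[of s] sp by (intro right mtends_intros Vcont) auto
          then have "mtends E 0 (at_right s)" using Vsym[OF sd] by simp
          then have "((\<lambda>q. E q x y) \<longlongrightarrow> (0::bmat) x y) (at_right s)" unfolding mtends_def by blast
          then show ?thesis by simp
        qed
        show "mderiv E (mm (C1 q) (E q) + mm (E q) (C2 q)) q" if q: "q \<in> {s<..<b}" for q
        proof -
          have qT: "q \<in> {0<..<T}" using q sp by auto
          have "mderiv E (Wr q - mtrans (Wr q)) q"
            unfolding E_def by (intro mderiv_intros dV[OF qT])
          moreover have "Wr q - mtrans (Wr q) = mm (C1 q) (E q) + mm (E q) (C2 q)"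
            by (simp add: odeF[OF qT] F_def C1_def C2_def E_def mm_simps tr_simps trQ trG2 algebra_simps)
          ultimately show ?thesis by simp
        qed
        show "\<bar>C1 q x y\<bar> \<le> max K1 K2" "\<bar>C2 q x y\<bar> \<le> max K1 K2" if "q \<in> {s<..<b}" for q x y
          using K1[of q x y] K2[of q x y] that by auto
      qed (use r that in auto)
      show ?thesis
        by (rule rsd_eqI) (use E0 in \<open>auto simp: E_def rV rsd_intros\<close>)
    qed
    \<comment> \<open>propagation of negativity of W\<close>
    define C where "C r = - (G1 + mm (Vr r) G2)" for r
    have sb: "s < b" using sp by simp
    have b1: "\<exists>K. \<forall>t\<in>{s<..b}. \<forall>x y. \<bar>C t x y\<bar> \<le> K"
    proof (rule bnd_lemma[OF sb])
      show "mtends C (C s) (at_right s)"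
        unfolding C_def using sbT[of s] sp by (intro right mtends_intros Vcont) auto
      show "mtends C (C t) (at t)" if "t \<in> {s<..b}" for t
        unfolding C_def using that sbT by (intro mtends_intros Vcont) auto
      show "rsd (C s)" for s unfolding C_def by (intro rsd_intros rG1 rG2 rV)
    qed
    then obtain K where K: "\<And>t x y. t \<in> {s<..b} \<Longrightarrow> \<bar>C t x y\<bar> \<le> K" by blast
    have "0 \<le> qf v (- Wr t)" for v
    proof (rule prop_psd[OF sb, of "\<lambda>r. - Wr r" "- Wr s" C K])
      show "((\<lambda>q. (- Wr q) x y) \<longlongrightarrow> (- Wr s) x y) (at_right s)" for x y
      proof -
        have "mtends (\<lambda>q. - Wr q) (- Wr s) (at_right s)"
          using sbT[of s] sp by (intro right mtends_intros Wcont) auto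
        then show ?thesis unfolding mtends_def by blast
      qed
      show "mderiv (\<lambda>r. - Wr r) (mm (C q) (- Wr q) + mm (- Wr q) (mtrans (C q))) q" if q: "q \<in> {s<..<b}" for q
      proof -
        have qT: "q \<in> {0<..<T}" using q sp by auto
        have "mderiv (\<lambda>r. - Wr r) (- DF q) q" by (intro mderiv_intros dW[OF qT])
        moreover have "- DF q = mm (C q) (- Wr q) + mm (- Wr q) (mtrans (C q))"
          by (simp add: DF_def C_def mm_simps tr_simps trG2 Vsym2[OF q] algebra_simps)
        ultimately show ?thesis by simp
      qed
      show "\<bar>C q x y\<bar> \<le> K" if "q \<in> {s<..<b}" for q x y using K that by auto
      show "symB (- Wr q)" if q: "q \<in> {s<..<b}" for q
      proof (rule symB_tr)
        have qT: "q \<in> {0<..<T}" using q sp by auto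
        show "mtrans (- Wr q) = - Wr q"
          by (simp add: odeF[OF qT] F_def mm_simps tr_simps trQ trG2 Vsym2[OF q] algebra_simps)
      qed
      show "0 \<le> qf v (- Wr s)" for v using Wneg[OF sd, of v] by (simp add: qf_uminus)
    qed (use sp in auto)
    then have wn: "qf v (Wr t) \<le> 0" for v by (simp add: qf_uminus)
    show "neg_semidef_on (boxes ns) (V' t)"
      unfolding neg_semidef_on_def
    proof
      fix v :: "box \<Rightarrow> real"
      have "(\<Sum>x\<in>boxes ns. \<Sum>y\<in>boxes ns. v x * V' t x y * v y) = qf v (Wr t)"
        unfolding qf_def Wr_def by (intro sum.cong refl) (simp add: rs_in)
      then show "(\<Sum>x\<in>boxes ns. \<Sum>y\<in>boxes ns. v x * V' t x y * v y) \<le> 0" using wn by simp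
    qed
  qed
qed

end
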